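(* In the example below, the strategy $\sigma$ is a symmetric Bayesian Nash equilibrium strategy that is weakly communication-proof but not strongly communication-proof (although it is not coordinated: after the message pair $(m_L,m_R)$ players miscoordinate with positive probability). Example: four types $L_1=(2,0,0,1)$, $L_2=(2,-15,0,1)$, $R_1=(1,0,0,2)$, $R_2=(1,0,-15,2)$ (written as $(u_{LL},u_{LR},u_{RL},u_{RR})$), with probabilities $P(L_1)=P(R_1)=1/18$, $P(L_2)=P(R_2)=8/18$, types drawn independently for the two players. Strategy $\sigma$: types $L_1,L_2$ send $m_L$ and types $R_1,R_2$ send $m_R$; after observing own message $m_L$ and opponent's $m_L$ all types play $L$; after own $m_R$ and opponent's $m_R$ all types play $R$; after own $m_L$ and opponent's $m_R$, type $L_1$ plays $L$ and type $L_2$ plays $R$; after own $m_R$ and opponent's $m_L$, type $R_1$ plays $R$ and type $R_2$ plays $L$.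
   Context: A type is a payoff vector $u=(u_{LL},u_{LR},u_{RL},u_{RR})$, where $u_{ab}$ is the payoff of a player of type $u$ who plays $a\in\{L,R\}$ while the opponent plays $b$. Two players' types are drawn independently from a given distribution. After learning types, players simultaneously send publicly observed costless messages from a finite set $M$ containing distinct messages $m_L,m_R$, then choose actions; a (symmetric) strategy specifies a distribution over messages for each type and a distribution over actions for each type and each observed pair (own message, opponent's message). Bayesian Nash equilibrium is defined as usual (no type can gain by deviating). Communication-proofness. Given a strategy profile of such a game with independent type distributions $(G,H)$ for players 1, 2, and a message pair $(m,m')$ sent with positive probability, the posteriors $G_m,H_{m'}$ are the conditional type distributions given the messages; the post-communication payoff of a type is its expected payoff from the action play prescribed after $(m,m')$, against the opponent's posterior. The renegotiation game after $(m,m')$ is the same game (one round of simultaneous communication with message set $M$, then actions) with player types drawn independently from $G_m$ and $H_{m'}$; its equilibria are possibly asymmetric Bayesian Nash equilibrium profiles. A profile $(\tau,\tau')$ CP trumps a profile $(\sigma,\sigma')$ with respect to $(G,H)$ and $(m,m')$ if it is an equilibrium of the renegotiation game and gives every type in the support of $G_m$ (player 1) and of $H_{m'}$ (player 2) an expected payoff at least its post-communication payoff, strictly for at least one such type. A symmetric equilibrium strategy $\sigma$ (with prior $F$ for both players) is strongly communication-proof if no profile CP trumps $(\sigma,\sigma)$ with respect to $(F,F)$ and any message pair; it is weakly communication-proof if for every $(\tau,\tau')$ that CP trumps $(\sigma,\sigma)$ with respect to $(F,F)$ and $(m,m')$, some profile CP trumps $(\tau,\tau')$ with respect to $(F_m,F_{m'})$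 and some message pair. *)

theory Defs
  imports Complex_Main
begin

text \<open>A payoff vector (u_LL, u_LR, u_RL, u_RR): u_ab is the payoff of a player
who plays a while the opponent plays b.\<close>

type_synonym payoff = "real \<times> real \<times> real \<times> real"

definition exp_pay :: "payoff \<Rightarrow> real \<Rightarrow> real \<Rightarrow> real" where
  "exp_pay v p q = (case v of (uLL, uLR, uRL, uRR) \<Rightarrow>
      p * q * uLL + p * (1 - q) * uLR + (1 - p) * q * uRL + (1 - p) * (1 - q) * uRR)"

definition is_dist :: "('x::finite \<Rightarrow> real) \<Rightarrow> bool" where
  "is_dist D \<longleftrightarrow> (\<forall>x. 0 \<le> D x) \<and> sum D UNIV = 1"

text \<open>A strategy: a distribution over messages for each type, and for each
type and observed pair (own message, opponent's message) the probability of
playing L (a distribution over the two actions L, R).\<close>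
type_synonym ('a, 'm) strategy = "('a \<Rightarrow> 'm \<Rightarrow> real) \<times> ('a \<Rightarrow> 'm \<Rightarrow> 'm \<Rightarrow> real)"

definition valid_strategy :: "('a::finite, 'm::finite) strategy \<Rightarrow> bool" where
  "valid_strategy s \<longleftrightarrow> (\<forall>t. is_dist (fst s t)) \<and>
     (\<forall>t m m'. 0 \<le> snd s t m m' \<and> snd s t m m' \<le> 1)"

definition type_payoff ::
  "('a \<Rightarrow> payoff) \<Rightarrow> 'a \<Rightarrow> ('m \<Rightarrow> real) \<Rightarrow> ('m \<Rightarrow> 'm \<Rightarrow> real) \<Rightarrow>
   ('a::finite \<Rightarrow> real) \<Rightarrow> ('a, 'm::finite) strategy \<Rightarrow> real" where
  "type_payoff u t \<mu> a H s' =
     (\<Sum>m\<in>UNIV. \<Sum>t'\<in>UNIV. \<Sum>m'\<in>UNIV.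
        \<mu> m * H t' * fst s' t' m' * exp_pay (u t) (a m m') (snd s' t' m' m))"

definition eq_pay ::
  "('a \<Rightarrow> payoff) \<Rightarrow> 'a \<Rightarrow> ('a::finite, 'm::finite) strategy \<Rightarrow> ('a \<Rightarrow> real) \<Rightarrow>
   ('a, 'm) strategy \<Rightarrow> real" where
  "eq_pay u t s H s' = type_payoff u t (fst s t) (snd s t) H s'"

definition is_eq ::
  "('a \<Rightarrow> payoff) \<Rightarrow> ('a::finite \<Rightarrow> real) \<Rightarrow> ('a \<Rightarrow> real) \<Rightarrow>
   ('a, 'm::finite) strategy \<Rightarrow> ('a, 'm) strategy \<Rightarrow> bool" where
  "is_eq u G H s1 s2 \<longleftrightarrow> valid_strategy s1 \<and> valid_strategy s2 \<and>
     (\<forall>t. G t > 0 \<longrightarrow> (\<forall>\<mu> a. is_dist \<mu> \<and> (\<forall>m m'. 0 \<le> a m m' \<and> a m m' \<le> 1) \<longrightarrow>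
         type_payoff u t \<mu> a H s2 \<le> eq_pay u t s1 H s2)) \<and>
     (\<forall>t. H t > 0 \<longrightarrow> (\<forall>\<mu> a. is_dist \<mu> \<and> (\<forall>m m'. 0 \<le> a m m' \<and> a m m' \<le> 1) \<longrightarrow>
         type_payoff u t \<mu> a G s1 \<le> eq_pay u t s2 G s1))"

definition msg_prob :: "('a::finite \<Rightarrow> real) \<Rightarrow> ('a, 'm) strategy \<Rightarrow> 'm \<Rightarrow> real" where
  "msg_prob G s m = (\<Sum>t\<in>UNIV. G t * fst s t m)"

definition post :: "('a::finite \<Rightarrow> real) \<Rightarrow> ('a, 'm) strategy \<Rightarrow> 'm \<Rightarrow> 'a \<Rightarrow> real" where
  "post G s m t = G t * fst s t m / msg_prob G s m"

definition pc_pay ::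
  "('a \<Rightarrow> payoff) \<Rightarrow> ('a::finite, 'm) strategy \<Rightarrow> ('a, 'm) strategy \<Rightarrow> ('a \<Rightarrow> real) \<Rightarrow>
   'm \<Rightarrow> 'm \<Rightarrow> 'a \<Rightarrow> real" where
  "pc_pay u s s' H m m' t =
     (\<Sum>t'\<in>UNIV. post H s' m' t' * exp_pay (u t) (snd s t m m') (snd s' t' m' m))"

definition CP_trumps ::
  "('a \<Rightarrow> payoff) \<Rightarrow> ('a::finite, 'm::finite) strategy \<Rightarrow> ('a, 'm) strategy \<Rightarrow>
   ('a, 'm) strategy \<Rightarrow> ('a, 'm) strategy \<Rightarrow> ('a \<Rightarrow> real) \<Rightarrow> ('a \<Rightarrow> real) \<Rightarrow>
   'm \<Rightarrow> 'm \<Rightarrow> bool" where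
  "CP_trumps u tau1 tau2 sig1 sig2 G H m m' \<longleftrightarrow>
     msg_prob G sig1 m > 0 \<and> msg_prob H sig2 m' > 0 \<and>
     is_eq u (post G sig1 m) (post H sig2 m') tau1 tau2 \<and>
     (\<forall>t. post G sig1 m t > 0 \<longrightarrow>
        pc_pay u sig1 sig2 H m m' t \<le> eq_pay u t tau1 (post H sig2 m') tau2) \<and>
     (\<forall>t. post H sig2 m' t > 0 \<longrightarrow>
        pc_pay u sig2 sig1 G m' m t \<le> eq_pay u t tau2 (post G sig1 m) tau1) \<and>
     ((\<exists>t. post G sig1 m t > 0 \<and>
        pc_pay u sig1 sig2 H m m' t < eq_pay u t tau1 (post H sig2 m') tau2) \<or>
      (\<exists>t. post H sig2 m' t > 0 \<and>
        pc_pay u sig2 sig1 G m' m t < eq_pay u t tau2 (post G sig1 m) tau1))"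

definition strongly_CP :: "('a \<Rightarrow> payoff) \<Rightarrow> ('a::finite \<Rightarrow> real) \<Rightarrow> ('a, 'm::finite) strategy \<Rightarrow> bool" where
  "strongly_CP u F sig \<longleftrightarrow> is_eq u F F sig sig \<and>
     \<not> (\<exists>tau1 tau2 m m'. CP_trumps u tau1 tau2 sig sig F F m m')"

definition weakly_CP :: "('a \<Rightarrow> payoff) \<Rightarrow> ('a::finite \<Rightarrow> real) \<Rightarrow> ('a, 'm::finite) strategy \<Rightarrow> bool" where
  "weakly_CP u F sig \<longleftrightarrow> is_eq u F F sig sig \<and>
     (\<forall>tau1 tau2 m m'. CP_trumps u tau1 tau2 sig sig F F m m' \<longrightarrow>
        (\<exists>rho1 rho2 n n'. CP_trumps u rho1 rho2 tau1 tau2 (post F sig m) (post F sig m') n n'))"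

definition miscoord_prob ::
  "('a::finite \<Rightarrow> real) \<Rightarrow> ('a \<Rightarrow> real) \<Rightarrow> ('a, 'm) strategy \<Rightarrow> ('a, 'm) strategy \<Rightarrow>
   'm \<Rightarrow> 'm \<Rightarrow> real" where
  "miscoord_prob G H s1 s2 m m' =
     (\<Sum>t\<in>UNIV. \<Sum>t'\<in>UNIV. post G s1 m t * post H s2 m' t' *
        (snd s1 t m m' * (1 - snd s2 t' m' m) + (1 - snd s1 t m m') * snd s2 t' m' m))"

datatype ex_type = L1 | L2 | R1 | R2

datatype ex_msg = mL | mR

instance ex_type :: finite
proof
  have "(UNIV :: ex_type set) = {L1, L2, R1, R2}" using ex_type.exhaust by auto
  then show "finite (UNIV :: ex_type set)" by (metis finite.emptyI finite_insert)
qed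

instance ex_msg :: finite
proof
  have "(UNIV :: ex_msg set) = {mL, mR}" using ex_msg.exhaust by auto
  then show "finite (UNIV :: ex_msg set)" by (metis finite.emptyI finite_insert)
qed

fun u_ex :: "ex_type \<Rightarrow> payoff" where
  "u_ex L1 = (2, 0, 0, 1)"
| "u_ex L2 = (2, -15, 0, 1)"
| "u_ex R1 = (1, 0, 0, 2)"
| "u_ex R2 = (1, 0, -15, 2)"

fun F_ex :: "ex_type \<Rightarrow> real" where
  "F_ex L1 = 1/18"
| "F_ex L2 = 8/18"
| "F_ex R1 = 1/18"
| "F_ex R2 = 8/18"

fun isL :: "ex_type \<Rightarrow> bool" where
  "isL L1 = True" | "isL L2 = True" | "isL R1 = False" | "isL R2 = False"

text \<open>Actions of a type after
an own message that type never sends are irrelevant and fixed arbitrarily.\<close>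
fun act_ex :: "ex_type \<Rightarrow> ex_msg \<Rightarrow> ex_msg \<Rightarrow> real" where
  "act_ex t mL mL = 1"
| "act_ex t mR mR = 0"
| "act_ex t mL mR = (if t = L1 then 1 else 0)"
| "act_ex t mR mL = (if t = R1 then 0 else 1)"

definition sigma_ex :: "(ex_type, ex_msg) strategy" where
  "sigma_ex = ((\<lambda>t m. if isL t = (m = mL) then 1 else 0), act_ex)"

end

theory Submission
  imports Defs
begin


lemma UNIV_ex_type: "(UNIV::ex_type set) = {L1,L2,R1,R2}" using ex_type.exhaust by auto
lemma UNIV_ex_msg: "(UNIV::ex_msg set) = {mL,mR}" using ex_msg.exhaust by auto
lemma sum_ex_type: "(\<Sum>t\<in>UNIV. f t) = f L1 + f L2 + f R1 + (f R2::real)"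
  by (simp add: UNIV_ex_type)
lemma sum_ex_msg: "(\<Sum>t\<in>UNIV. f t) = f mL + (f mR::real)"
  by (simp add: UNIV_ex_msg)
lemma all_ex_type: "(\<forall>t. P t) \<longleftrightarrow> P L1 \<and> P L2 \<and> P R1 \<and> P R2"
  by (metis ex_type.exhaust)
lemma ex_ex_type: "(\<exists>t. P t) \<longleftrightarrow> P L1 \<or> P L2 \<or> P R1 \<or> P R2"
  by (metis ex_type.exhaust)
lemma all_ex_msg: "(\<forall>t. P t) \<longleftrightarrow> P mL \<and> P mR"
  by (metis ex_msg.exhaust)
lemma ex_ex_msg: "(\<exists>t. P t) \<longleftrightarrow> P mL \<or> P mR"
  by (metis ex_msg.exhaust)

definition EPm :: "payoff \<Rightarrow> real \<Rightarrow> real \<Rightarrow> real \<Rightarrow> real" where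
  "EPm v p Q Y = (case v of (a, b, c, d) \<Rightarrow>
      p * Q * a + p * (Y - Q) * b + (1 - p) * Q * c + (1 - p) * (Y - Q) * d)"

definition Qf :: "('a::finite \<Rightarrow> real) \<Rightarrow> ('a, 'm) strategy \<Rightarrow> 'm \<Rightarrow> 'm \<Rightarrow> real" where
  "Qf H s m' m = (\<Sum>t\<in>UNIV. H t * fst s t m' * snd s t m' m)"

definition BRv :: "payoff \<Rightarrow> real \<Rightarrow> real \<Rightarrow> real" where
  "BRv v Q Y = max (EPm v 1 Q Y) (EPm v 0 Q Y)"

lemma EPm_affine: "EPm v p Q Y = p * EPm v 1 Q Y + (1 - p) * EPm v 0 Q Y"
  by (cases v) (simp add: EPm_def algebra_simps)

lemma EPm_le_BRv: assumes "0 \<le> p" "p \<le> 1" shows "EPm v p Q Y \<le> BRv v Q Y"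
proof -
  have "p * EPm v 1 Q Y + (1 - p) * EPm v 0 Q Y \<le> p * BRv v Q Y + (1 - p) * BRv v Q Y"
    using assms by (intro add_mono mult_left_mono) (auto simp: BRv_def)
  then show ?thesis by (subst EPm_affine) (simp add: algebra_simps)
qed

lemma EPm_scale: "c \<noteq> 0 \<Longrightarrow> EPm v p (Q / c) (Y / c) = EPm v p Q Y / c"
  by (cases v) (simp add: EPm_def field_simps)

lemma lin_sum: "(\<Sum>t\<in>A. w t * exp_pay v p (b t)) = EPm v p (\<Sum>t\<in>A. w t * b t) (\<Sum>t\<in>A. w t)"
proof (cases v)
  case (fields a b' c d)
  show ?thesis unfolding fields exp_pay_def EPm_def
    by (simp add: sum_distrib_left sum_distrib_right sum.distrib sum_subtractf algebra_simps)
qed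

lemma type_payoff_form:
  "type_payoff u t \<mu> a H s' =
     (\<Sum>m\<in>UNIV. \<mu> m * (\<Sum>m'\<in>UNIV. EPm (u t) (a m m') (Qf H s' m' m) (msg_prob H s' m')))"
proof -
  have "type_payoff u t \<mu> a H s' = (\<Sum>m\<in>UNIV. \<mu> m * (\<Sum>m'\<in>UNIV. \<Sum>t'\<in>UNIV.
          (H t' * fst s' t' m') * exp_pay (u t) (a m m') (snd s' t' m' m)))"
    unfolding type_payoff_def
    by (rule sum.cong[OF refl], subst sum.swap) (simp add: sum_distrib_left algebra_simps)
  also have "\<dots> = (\<Sum>m\<in>UNIV. \<mu> m * (\<Sum>m'\<in>UNIV. EPm (u t) (a m m') (Qf H s' m' m) (msg_prob H s' m')))"
    by (simp only: lin_sum) (simp add: Qf_def msg_prob_def)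
  finally show ?thesis .
qed

lemma pc_pay_form:
  assumes "msg_prob H s' m' \<noteq> 0"
  shows "pc_pay u s s' H m m' t =
     EPm (u t) (snd s t m m') (Qf H s' m' m) (msg_prob H s' m') / msg_prob H s' m'"
proof -
  have "pc_pay u s s' H m m' t = (\<Sum>t'\<in>UNIV. (H t' * fst s' t' m' / msg_prob H s' m') *
          exp_pay (u t) (snd s t m m') (snd s' t' m' m))"
    unfolding pc_pay_def post_def by simp
  also have "\<dots> = EPm (u t) (snd s t m m') (Qf H s' m' m / msg_prob H s' m') (msg_prob H s' m' / msg_prob H s' m')"
    by (simp only: lin_sum, unfold Qf_def msg_prob_def sum_divide_distrib, simp)
  also have "\<dots> = EPm (u t) (snd s t m m') (Qf H s' m' m) (msg_prob H s' m') / msg_prob H s' m'"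
    using EPm_scale[OF assms] by blast
  finally show ?thesis .
qed

lemma dev_bound:
  assumes "is_dist \<mu>" "\<forall>m m'. 0 \<le> a m m' \<and> a m m' \<le> 1"
    "\<forall>m. (\<Sum>m'\<in>UNIV. BRv (u t) (Qf H s' m' m) (msg_prob H s' m')) \<le> B"
  shows "type_payoff u t \<mu> (a::'m::finite \<Rightarrow> 'm \<Rightarrow> real) H (s'::('a::finite,'m) strategy) \<le> B"
proof -
  have "type_payoff u t \<mu> a H s' \<le> (\<Sum>m\<in>UNIV. \<mu> m * B)"
    unfolding type_payoff_form
  proof (rule sum_mono, rule mult_left_mono)
    fix m
    show "0 \<le> \<mu> m" using assms(1) by (simp add: is_dist_def)
    have "(\<Sum>m'\<in>UNIV. EPm (u t) (a m m') (Qf H s' m' m) (msg_prob H s' m'))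
        \<le> (\<Sum>m'\<in>UNIV. BRv (u t) (Qf H s' m' m) (msg_prob H s' m'))"
      using assms(2) by (intro sum_mono EPm_le_BRv) auto
    then show "(\<Sum>m'\<in>UNIV. EPm (u t) (a m m') (Qf H s' m' m) (msg_prob H s' m')) \<le> B"
      using assms(3) by (meson order_trans)
  qed
  also have "\<dots> = B" using assms(1) by (simp add: is_dist_def sum_distrib_right[symmetric])
  finally show ?thesis .
qed

lemma is_eqI:
  assumes "valid_strategy s1" "valid_strategy s2"
    "\<forall>t. G t > 0 \<longrightarrow> (\<forall>m. (\<Sum>m'\<in>UNIV. BRv (u t) (Qf H s2 m' m) (msg_prob H s2 m')) \<le> eq_pay u t s1 H s2)"
    "\<forall>t. H t > 0 \<longrightarrow> (\<forall>m. (\<Sum>m'\<in>UNIV. BRv (u t) (Qf G s1 m' m) (msg_prob G s1 m')) \<le> eq_pay u t s2 G s1)"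
  shows "is_eq u G H s1 (s2::('a::finite,'m::finite) strategy)"
  unfolding is_eq_def using assms
  by (auto intro!: dev_bound)

lemma is_eq_sym: "is_eq u G H s1 s2 \<Longrightarrow> is_eq u H G s2 s1"
  unfolding is_eq_def by blast

lemma V_le:
  assumes "is_eq u G H s1 s2" "G t > 0"
  shows "(\<Sum>m'\<in>UNIV. BRv (u t) (Qf H s2 m' n) (msg_prob H s2 m')) \<le> eq_pay u t s1 H (s2::('a::finite,'m::finite) strategy)"
proof -
  define \<mu> :: "'m \<Rightarrow> real" where "\<mu> = (\<lambda>m. if m = n then 1 else 0)"
  define a where "a = (\<lambda>m m'. if EPm (u t) 0 (Qf H s2 m' m) (msg_prob H s2 m') \<le> EPm (u t) 1 (Qf H s2 m' m) (msg_prob H s2 m') then 1 else (0::real))"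
  have d: "is_dist \<mu>" by (simp add: is_dist_def \<mu>_def)
  have a: "\<forall>m m'. 0 \<le> a m m' \<and> a m m' \<le> 1" by (simp add: a_def)
  have "type_payoff u t \<mu> a H s2 \<le> eq_pay u t s1 H s2"
    using assms d a unfolding is_eq_def by blast
  moreover have "type_payoff u t \<mu> a H s2 = (\<Sum>m'\<in>UNIV. BRv (u t) (Qf H s2 m' n) (msg_prob H s2 m'))"
  proof -
    have "type_payoff u t \<mu> a H s2 = (\<Sum>m'\<in>UNIV. EPm (u t) (a n m') (Qf H s2 m' n) (msg_prob H s2 m'))"
      unfolding type_payoff_form \<mu>_def by (simp add: if_distrib[of "\<lambda>c. c * _"] cong: if_cong)
    also have "\<dots> = (\<Sum>m'\<in>UNIV. BRv (u t) (Qf H s2 m' n) (msg_prob H s2 m'))"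
      by (rule sum.cong) (auto simp: a_def BRv_def)
    finally show ?thesis .
  qed
  ultimately show ?thesis by simp
qed

lemma eq_structure:
  fixes s2 :: "('a::finite,'m::finite) strategy"
  assumes "is_eq u G H s1 s2" "G t > 0" "fst s1 t n > 0"
  shows "eq_pay u t s1 H s2 = (\<Sum>m'\<in>UNIV. BRv (u t) (Qf H s2 m' n) (msg_prob H s2 m'))"
    "EPm (u t) (snd s1 t n n') (Qf H s2 n' n) (msg_prob H s2 n') = BRv (u t) (Qf H s2 n' n) (msg_prob H s2 n')"
proof -
  define x where "x = fst s1 t"
  define W where "W = (\<lambda>m. (\<Sum>m'\<in>UNIV. EPm (u t) (snd s1 t m m') (Qf H s2 m' m) (msg_prob H s2 m')))"
  define V where "V = (\<lambda>m. (\<Sum>m'\<in>UNIV. BRv (u t) (Qf H s2 m' m) (msg_prob H s2 m')))"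
  define U where "U = eq_pay u t s1 H s2"
  have vs: "valid_strategy s1" using assms(1) by (simp add: is_eq_def)
  have x0: "\<forall>m. 0 \<le> x m" and x1: "sum x UNIV = 1" using vs by (auto simp: valid_strategy_def is_dist_def x_def)
  have act: "\<forall>m m'. 0 \<le> snd s1 t m m' \<and> snd s1 t m m' \<le> 1" using vs by (simp add: valid_strategy_def)
  have U: "U = (\<Sum>m\<in>UNIV. x m * W m)" unfolding U_def eq_pay_def type_payoff_form x_def W_def by simp
  have WV: "\<And>m. W m \<le> V m" unfolding W_def V_def using act by (intro sum_mono EPm_le_BRv) auto
  have VU: "\<And>m. V m \<le> U" unfolding V_def U_def using V_le[OF assms(1,2)] by blast
  have "(\<Sum>m\<in>UNIV. x m * (U - W m)) = U * sum x UNIV - (\<Sum>m\<in>UNIV. x m * W m)"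
    by (simp add: algebra_simps sum_subtractf sum_distrib_left)
  also have "\<dots> = 0" using U x1 by simp
  finally have z: "(\<Sum>m\<in>UNIV. x m * (U - W m)) = 0" .
  have nn: "\<forall>m\<in>UNIV. 0 \<le> x m * (U - W m)" using x0 WV VU by (meson diff_ge_0_iff_ge mult_nonneg_nonneg order_trans)
  have "x n * (U - W n) = 0" using z nn by (simp add: sum_nonneg_eq_0_iff)
  then have Wn: "W n = U" using assms(3) x_def by simp
  then have Vn: "V n = U" using WV[of n] VU[of n] by simp
  then show "eq_pay u t s1 H s2 = (\<Sum>m'\<in>UNIV. BRv (u t) (Qf H s2 m' n) (msg_prob H s2 m'))"
    by (simp add: U_def V_def)
  have "(\<Sum>m'\<in>UNIV. BRv (u t) (Qf H s2 m' n) (msg_prob H s2 m') - EPm (u t) (snd s1 t n m') (Qf H s2 m' n) (msg_prob H s2 m')) = 0"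
    using Wn Vn by (simp add: sum_subtractf V_def W_def)
  moreover have "\<forall>m'\<in>UNIV. 0 \<le> BRv (u t) (Qf H s2 m' n) (msg_prob H s2 m') - EPm (u t) (snd s1 t n m') (Qf H s2 m' n) (msg_prob H s2 m')"
    using act EPm_le_BRv by simp
  ultimately show "EPm (u t) (snd s1 t n n') (Qf H s2 n' n) (msg_prob H s2 n') = BRv (u t) (Qf H s2 n' n) (msg_prob H s2 n')"
    by (simp add: sum_nonneg_eq_0_iff)
qed



fun G0 :: "ex_type \<Rightarrow> real" where
  "G0 L1 = 1/9" | "G0 L2 = 8/9" | "G0 R1 = 0" | "G0 R2 = 0"
fun H0 :: "ex_type \<Rightarrow> real" where
  "H0 L1 = 0" | "H0 L2 = 0" | "H0 R1 = 1/9" | "H0 R2 = 8/9"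

lemma msgF_mL: "msg_prob F_ex sigma_ex mL = 1/2"
  by (simp add: msg_prob_def sum_ex_type sigma_ex_def)
lemma msgF_mR: "msg_prob F_ex sigma_ex mR = 1/2"
  by (simp add: msg_prob_def sum_ex_type sigma_ex_def)

lemma post_mL: "post F_ex sigma_ex mL = G0"
  by (rule ext, case_tac x) (simp_all add: post_def msgF_mL, simp_all add: sigma_ex_def)
lemma post_mR: "post F_ex sigma_ex mR = H0"
  by (rule ext, case_tac x) (simp_all add: post_def msgF_mR, simp_all add: sigma_ex_def)

lemma valid_sigma: "valid_strategy sigma_ex"
  unfolding valid_strategy_def is_dist_def sigma_ex_def
  apply (simp add: sum_ex_msg)
  apply (intro allI)
  apply (case_tac t; case_tac m; case_tac m'; simp)
  done

lemma sigma_eq: "is_eq u_ex F_ex F_ex sigma_ex sigma_ex"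
  apply (rule is_eqI[OF valid_sigma valid_sigma])
  apply (simp_all only: all_ex_type all_ex_msg)
  apply (simp_all add: eq_pay_def type_payoff_form BRv_def EPm_def Qf_def msg_prob_def sum_ex_type sum_ex_msg sigma_ex_def)
  done



fun t1m :: "ex_type \<Rightarrow> ex_msg \<Rightarrow> real" where
  "t1m L2 mL = 17/26" | "t1m L2 mR = 9/26" | "t1m t mL = 1" | "t1m t mR = 0"
fun t1a :: "ex_type \<Rightarrow> ex_msg \<Rightarrow> ex_msg \<Rightarrow> real" where
  "t1a L2 mL mL = 1" | "t1a L2 mL mR = 0" | "t1a L2 mR mL = 1/9" | "t1a L2 mR mR = 0" | "t1a t m m' = 1"
fun t2m :: "ex_type \<Rightarrow> ex_msg \<Rightarrow> real" where
  "t2m R2 mL = 9/26" | "t2m R2 mR = 17/26" | "t2m t mL = 0" | "t2m t mR = 1"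
fun t2a :: "ex_type \<Rightarrow> ex_msg \<Rightarrow> ex_msg \<Rightarrow> real" where
  "t2a R2 mL mL = 1" | "t2a R2 mL mR = 8/9" | "t2a R2 mR mL = 1" | "t2a R2 mR mR = 0" | "t2a t m m' = 0"

definition "trA = (t1m, t1a)"
definition "trB = (t2m, t2a)"

lemma valid_tau1: "valid_strategy trA"
  unfolding valid_strategy_def is_dist_def trA_def
  by (simp add: sum_ex_msg all_ex_type all_ex_msg)

lemma valid_tau2: "valid_strategy trB"
  unfolding valid_strategy_def is_dist_def trB_def
  by (simp add: sum_ex_msg all_ex_type all_ex_msg)

lemma tau_eq: "is_eq u_ex G0 H0 trA trB"
  apply (rule is_eqI[OF valid_tau1 valid_tau2])
  apply (simp_all only: all_ex_type all_ex_msg)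
  apply (simp_all add: eq_pay_def type_payoff_form BRv_def EPm_def Qf_def msg_prob_def sum_ex_type sum_ex_msg trA_def trB_def)
  done

lemma eqp_tau: "eq_pay u_ex L1 trA H0 trB = 16/9" "eq_pay u_ex L2 trA H0 trB = 85/117"
  "eq_pay u_ex R1 trB G0 trA = 16/9" "eq_pay u_ex R2 trB G0 trA = 85/117"
  by (simp_all add: eq_pay_def type_payoff_form BRv_def EPm_def Qf_def msg_prob_def sum_ex_type sum_ex_msg trA_def trB_def)

lemma pcs: "pc_pay u_ex sigma_ex sigma_ex F_ex mL mR L1 = 16/9"
  "pc_pay u_ex sigma_ex sigma_ex F_ex mL mR L2 = 1/9"
  "pc_pay u_ex sigma_ex sigma_ex F_ex mR mL R1 = 16/9"
  "pc_pay u_ex sigma_ex sigma_ex F_ex mR mL R2 = 1/9"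
  by (simp_all add: pc_pay_def post_mL post_mR sum_ex_type exp_pay_def, simp_all add: sigma_ex_def)

lemma not_strong: "\<not> strongly_CP u_ex F_ex sigma_ex"
proof -
  have "CP_trumps u_ex trA trB sigma_ex sigma_ex F_ex F_ex mL mR"
    unfolding CP_trumps_def post_mL post_mR
    apply (simp only: msgF_mL msgF_mR tau_eq all_ex_type ex_ex_type)
    apply (simp add: eqp_tau pcs)
    done
  then show ?thesis unfolding strongly_CP_def by blast
qed



definition FL1 :: "real \<Rightarrow> real \<Rightarrow> real" where "FL1 q y = max (2*q) (y - q)"
definition FL2 :: "real \<Rightarrow> real \<Rightarrow> real" where "FL2 q y = max (17*q - 15*y) (y - q)"
definition FR1 :: "real \<Rightarrow> real \<Rightarrow> real" where "FR1 p x = max p (2*x - 2*p)"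
definition FR2 :: "real \<Rightarrow> real \<Rightarrow> real" where "FR2 p x = max p (2*x - 17*p)"

lemma FL1_ub: "0 \<le> q \<Longrightarrow> q \<le> y \<Longrightarrow> FL1 q y \<le> 2*y" by (simp add: FL1_def)
lemma FL2_lb: "0 \<le> q \<Longrightarrow> q \<le> y \<Longrightarrow> FL2 q y \<ge> y/9" by (simp add: FL2_def max_def)
lemma FR1_ub: "0 \<le> p \<Longrightarrow> p \<le> x \<Longrightarrow> FR1 p x \<le> 2*x" by (simp add: FR1_def)
lemma FR2_lb: "0 \<le> p \<Longrightarrow> p \<le> x \<Longrightarrow> FR2 p x \<ge> x/9" by (simp add: FR2_def max_def)

lemma case2:
  fixes x1A x1B x2A x2B y1A y1B y2A y2B QAA QAB QBA QBB PAA PAB PBA PBB U1 U2 W1 W2 XA XB YA YB :: real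
  assumes XA: "XA = x1A/9 + 8*x2A/9" and XB: "XB = x1B/9 + 8*x2B/9"
    and YA: "YA = y1A/9 + 8*y2A/9" and YB: "YB = y1B/9 + 8*y2B/9"
    and nn: "0 \<le> x1A" "0 \<le> x1B" "0 \<le> x2A" "0 \<le> x2B" "0 \<le> y1A" "0 \<le> y1B" "0 \<le> y2A" "0 \<le> y2B"
    and s: "x1A + x1B = 1" "x2A + x2B = 1" "y1A + y1B = 1" "y2A + y2B = 1"
    and Qb: "0 \<le> QAA" "QAA \<le> YA" "0 \<le> QAB" "QAB \<le> YB" "0 \<le> QBA" "QBA \<le> YA" "0 \<le> QBB" "QBB \<le> YB"
    and Pb: "0 \<le> PAA" "PAA \<le> XA" "0 \<le> PAB" "PAB \<le> XA" "0 \<le> PBA" "PBA \<le> XB" "0 \<le> PBB" "PBB \<le> XB"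
    and IC: "FL1 QAA YA + FL1 QAB YB \<le> U1" "FL1 QBA YA + FL1 QBB YB \<le> U1"
      "FL2 QAA YA + FL2 QAB YB \<le> U2" "FL2 QBA YA + FL2 QBB YB \<le> U2"
      "FR1 PAA XA + FR1 PBA XB \<le> W1" "FR1 PAB XA + FR1 PBB XB \<le> W1"
      "FR2 PAA XA + FR2 PBA XB \<le> W2" "FR2 PAB XA + FR2 PBB XB \<le> W2"
    and EQ: "x1A > 0 \<Longrightarrow> U1 = FL1 QAA YA + FL1 QAB YB" "x1B > 0 \<Longrightarrow> U1 = FL1 QBA YA + FL1 QBB YB"
      "x2A > 0 \<Longrightarrow> U2 = FL2 QAA YA + FL2 QAB YB" "x2B > 0 \<Longrightarrow> U2 = FL2 QBA YA + FL2 QBB YB"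
      "y1A > 0 \<Longrightarrow> W1 = FR1 PAA XA + FR1 PBA XB" "y1B > 0 \<Longrightarrow> W1 = FR1 PAB XA + FR1 PBB XB"
      "y2A > 0 \<Longrightarrow> W2 = FR2 PAA XA + FR2 PBA XB" "y2B > 0 \<Longrightarrow> W2 = FR2 PAB XA + FR2 PBB XB"
    and CAB: "XA > 0 \<Longrightarrow> YB > 0 \<Longrightarrow> (QAB = YB \<and> PAB = XA) \<or> (QAB = 0 \<and> PAB = 0) \<or>
        (x1A > 0 \<and> x2A > 0 \<and> y1B > 0 \<and> y2B > 0 \<and> 2*QAB > YB \<and> 9*QAB \<le> 8*YB \<and> 9*PAB \<ge> XA \<and> 2*PAB < XA)"
    and CBA: "XB > 0 \<Longrightarrow> YA > 0 \<Longrightarrow> (QBA = YA \<and> PBA = XB) \<or> (QBA = 0 \<and> PBA = 0) \<or>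
        (x1B > 0 \<and> x2B > 0 \<and> y1A > 0 \<and> y2A > 0 \<and> 2*QBA > YA \<and> 9*QBA \<le> 8*YA \<and> 9*PBA \<ge> XB \<and> 2*PBA < XB)"
    and CBB: "XB > 0 \<Longrightarrow> YB > 0 \<Longrightarrow> (QBB = YB \<and> PBB = XB) \<or> (QBB = 0 \<and> PBB = 0) \<or>
        (x1B > 0 \<and> x2B > 0 \<and> y1B > 0 \<and> y2B > 0 \<and> 2*QBB > YB \<and> 9*QBB \<le> 8*YB \<and> 9*PBB \<ge> XB \<and> 2*PBB < XB)"
    and M: "x1A > 0" "x2A > 0" "y1A > 0" "y2A > 0" "2*QAA > YA" "9*QAA \<le> 8*YA" "9*PAA \<ge> XA" "2*PAA < XA"
    and TH: "U1 \<ge> 16/9" "U2 \<ge> 1/9" "W1 \<ge> 16/9" "W2 \<ge> 1/9"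
      "U1 > 16/9 \<or> U2 > 1/9 \<or> W1 > 16/9 \<or> W2 > 1/9"
  shows False
proof -
  have YAB: "YA + YB = 1" using YA YB s by linarith
  have XAB: "XA + XB = 1" using XA XB s by linarith
  have YAp: "YA > 0" using YA M nn by linarith
  have XAp: "XA > 0" using XA M nn by linarith
  have fAA1: "FL1 QAA YA = 2*QAA" using M by (simp add: FL1_def)
  have fAA2: "FL2 QAA YA = YA - QAA" using M by (simp add: FL2_def)
  have gAA1: "FR1 PAA XA = 2*XA - 2*PAA" using M by (simp add: FR1_def)
  have gAA2: "FR2 PAA XA = PAA" using M by (simp add: FR2_def)
  have U1e: "U1 = 2*QAA + FL1 QAB YB" using EQ(1)[OF M(1)] fAA1 by simp
  have U2e: "U2 = YA - QAA + FL2 QAB YB" using EQ(3)[OF M(2)] fAA2 by simp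
  have W1e: "W1 = 2*XA - 2*PAA + FR1 PBA XB" using EQ(5)[OF M(3)] gAA1 by simp
  have W2e: "W2 = PAA + FR2 PBA XB" using EQ(7)[OF M(4)] gAA2 by simp
  have Lside: "(U1 = 16/9 \<and> U2 = 1/9) \<or> (YB > 0 \<and> QAB = YB \<and> PAB = XA)"
  proof (cases "YB > 0")
    case False
    then have "YB = 0" using YB nn by linarith
    then have "QAB = 0" using Qb by linarith
    then have "FL1 QAB YB = 0" "FL2 QAB YB = 0" using \<open>YB = 0\<close> by (simp_all add: FL1_def FL2_def)
    then have "U1 = 16/9 \<and> U2 = 1/9" using U1e U2e M TH YAB \<open>YB = 0\<close> by - (intro conjI; linarith)
    then show ?thesis by blast
  next
    case True
    from CAB[OF XAp True] show ?thesis
    proof (elim disjE)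
      assume "QAB = YB \<and> PAB = XA" then show ?thesis using True by simp
    next
      assume h: "QAB = 0 \<and> PAB = 0"
      then have "FL1 QAB YB = YB" using True by (simp add: FL1_def)
      then have False using U1e M TH YAB True by linarith
      then show ?thesis ..
    next
      assume h: "x1A > 0 \<and> x2A > 0 \<and> y1B > 0 \<and> y2B > 0 \<and> 2*QAB > YB \<and> 9*QAB \<le> 8*YB \<and> 9*PAB \<ge> XA \<and> 2*PAB < XA"
      then have "FL1 QAB YB = 2*QAB" "FL2 QAB YB = YB - QAB" by (simp_all add: FL1_def FL2_def)
      then have "U1 = 16/9 \<and> U2 = 1/9" using U1e U2e M TH YAB h by - (intro conjI; linarith)
      then show ?thesis by blast
    qed
  qed
  have Rside: "(W1 = 16/9 \<and> W2 = 1/9) \<or> (XB > 0 \<and> QBA = 0 \<and> PBA = 0)"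
  proof (cases "XB > 0")
    case False
    then have "XB = 0" using XB nn by linarith
    then have "PBA = 0" using Pb by linarith
    then have "FR1 PBA XB = 0" "FR2 PBA XB = 0" using \<open>XB = 0\<close> by (simp_all add: FR1_def FR2_def)
    then have "W1 = 2*XA - 2*PAA" "W2 = PAA" using W1e W2e by simp_all
    moreover have "XA = 1" using XAB \<open>XB = 0\<close> by simp
    ultimately have "W1 = 16/9 \<and> W2 = 1/9" using M(7) TH(3) by - (intro conjI; linarith)
    then show ?thesis by blast
  next
    case True
    from CBA[OF True YAp] show ?thesis
    proof (elim disjE)
      assume h: "QBA = YA \<and> PBA = XB"
      then have "FR1 PBA XB = XB" using True by (simp add: FR1_def)
      then have False using W1e M TH XAB True by linarith
      then show ?thesis ..
    next
      assume "QBA = 0 \<and> PBA = 0" then show ?thesis using True by simp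
    next
      assume h: "x1B > 0 \<and> x2B > 0 \<and> y1A > 0 \<and> y2A > 0 \<and> 2*QBA > YA \<and> 9*QBA \<le> 8*YA \<and> 9*PBA \<ge> XB \<and> 2*PBA < XB"
      then have "FR1 PBA XB = 2*XB - 2*PBA" "FR2 PBA XB = PBA" by (simp_all add: FR1_def FR2_def)
      then have "W1 = 16/9 \<and> W2 = 1/9" using W1e W2e M TH XAB h by - (intro conjI; linarith)
      then show ?thesis by blast
    qed
  qed
  show False
  proof (cases "U1 = 16/9 \<and> U2 = 1/9")
    case L1: True
    show False
    proof (cases "W1 = 16/9 \<and> W2 = 1/9")
      case True then show False using L1 TH by linarith
    next
      case False
      then have r: "XB > 0 \<and> QBA = 0 \<and> PBA = 0" using Rside by blast
      have "FL2 QBA YA = YA" using r YAp by (simp add: FL2_def)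
      moreover have "FL2 QBB YB \<ge> YB/9" using FL2_lb Qb by blast
      ultimately show False using IC(4) L1 YAB YAp by linarith
    qed
  next
    case False
    then have l: "YB > 0 \<and> QAB = YB \<and> PAB = XA" using Lside by blast
    show False
    proof (cases "W1 = 16/9 \<and> W2 = 1/9")
      case R1: True
      have "FR2 PAB XA = XA" using l XAp by (simp add: FR2_def)
      moreover have "FR2 PBB XB \<ge> XB/9" using FR2_lb Pb by blast
      ultimately show False using IC(8) R1 XAB XAp by linarith
    next
      case False
      then have r: "XB > 0 \<and> QBA = 0 \<and> PBA = 0" using Rside by blast
      have x1B: "x1B = 0"
      proof (rule ccontr)
        assume "x1B \<noteq> 0" then have "x1B > 0" using nn by linarith
        then have e: "U1 = FL1 QBA YA + FL1 QBB YB" by (rule EQ(2))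
        have "FL1 QBA YA = YA" using r YAp by (simp add: FL1_def)
        moreover have "FL1 QBB YB \<le> 2*YB" using FL1_ub Qb by blast
        moreover have "FL1 QAB YB = 2*YB" using l by (simp add: FL1_def)
        ultimately show False using e U1e M by linarith
      qed
      have y1B: "y1B = 0"
      proof (rule ccontr)
        assume "y1B \<noteq> 0" then have "y1B > 0" using nn by linarith
        then have e: "W1 = FR1 PAB XA + FR1 PBB XB" by (rule EQ(6))
        have "FR1 PAB XA = XA" using l XAp by (simp add: FR1_def)
        moreover have "FR1 PBB XB \<le> 2*XB" using FR1_ub Pb by blast
        moreover have "FR1 PBA XB = 2*XB" using r by (simp add: FR1_def)
        ultimately show False using e W1e M by linarith
      qed
      have x2B: "x2B > 0" using r XB x1B nn by linarith
      have y2B: "y2B > 0" using l YB y1B nn by linarith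
      have fAB2: "FL2 QAB YB = 2*YB" using l by (simp add: FL2_def)
      have gBA2: "FR2 PBA XB = 2*XB" using r by (simp add: FR2_def)
      from CBB[OF conjunct1[OF r] conjunct1[OF l]] x1B show False
      proof (elim disjE)
        assume h: "QBB = YB \<and> PBB = XB"
        have "FL2 QBA YA = YA" using r YAp by (simp add: FL2_def)
        moreover have "FL2 QBB YB = 2*YB" using h l by (simp add: FL2_def)
        ultimately show False using EQ(4)[OF x2B] U2e fAB2 M by linarith
      next
        assume h: "QBB = 0 \<and> PBB = 0"
        have "FR2 PAB XA = XA" using l XAp by (simp add: FR2_def)
        moreover have "FR2 PBB XB = 2*XB" using h r by (simp add: FR2_def)
        ultimately show False using EQ(8)[OF y2B] W2e gBA2 M XAp by linarith
      next
        assume "x1B > 0 \<and> x2B > 0 \<and> y1B > 0 \<and> y2B > 0 \<and> 2*QBB > YB \<and> 9*QBB \<le> 8*YB \<and> 9*PBB \<ge> XB \<and> 2*PBB < XB"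
        then show False using x1B by simp
      qed
    qed
  qed
qed

fun oth :: "ex_msg \<Rightarrow> ex_msg" where "oth mL = mR" | "oth mR = mL"

lemma core:
  fixes x1 x2 y1 y2 :: "ex_msg \<Rightarrow> real" and Q P :: "ex_msg \<Rightarrow> ex_msg \<Rightarrow> real"
    and U1 U2 W1 W2 :: real and X Y :: "ex_msg \<Rightarrow> real"
  assumes X: "\<And>n. X n = x1 n/9 + 8*x2 n/9" and Y: "\<And>n. Y n = y1 n/9 + 8*y2 n/9"
    and nn: "\<And>n. 0 \<le> x1 n" "\<And>n. 0 \<le> x2 n" "\<And>n. 0 \<le> y1 n" "\<And>n. 0 \<le> y2 n"
    and s: "\<And>a. x1 a + x1 (oth a) = 1" "\<And>a. x2 a + x2 (oth a) = 1"
      "\<And>a. y1 a + y1 (oth a) = 1" "\<And>a. y2 a + y2 (oth a) = 1"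
    and Qb: "\<And>n n'. 0 \<le> Q n n'" "\<And>n n'. Q n n' \<le> Y n'"
    and Pb: "\<And>n n'. 0 \<le> P n n'" "\<And>n n'. P n n' \<le> X n"
    and IC: "\<And>n a. FL1 (Q n a) (Y a) + FL1 (Q n (oth a)) (Y (oth a)) \<le> U1"
      "\<And>n a. FL2 (Q n a) (Y a) + FL2 (Q n (oth a)) (Y (oth a)) \<le> U2"
      "\<And>n a. FR1 (P a n) (X a) + FR1 (P (oth a) n) (X (oth a)) \<le> W1"
      "\<And>n a. FR2 (P a n) (X a) + FR2 (P (oth a) n) (X (oth a)) \<le> W2"
    and EQ: "\<And>n a. x1 n > 0 \<Longrightarrow> U1 = FL1 (Q n a) (Y a) + FL1 (Q n (oth a)) (Y (oth a))"
      "\<And>n a. x2 n > 0 \<Longrightarrow> U2 = FL2 (Q n a) (Y a) + FL2 (Q n (oth a)) (Y (oth a))"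
      "\<And>n a. y1 n > 0 \<Longrightarrow> W1 = FR1 (P a n) (X a) + FR1 (P (oth a) n) (X (oth a))"
      "\<And>n a. y2 n > 0 \<Longrightarrow> W2 = FR2 (P a n) (X a) + FR2 (P (oth a) n) (X (oth a))"
    and CL: "\<And>n n'. X n > 0 \<Longrightarrow> Y n' > 0 \<Longrightarrow> (Q n n' = Y n' \<and> P n n' = X n) \<or> (Q n n' = 0 \<and> P n n' = 0) \<or>
        (x1 n > 0 \<and> x2 n > 0 \<and> y1 n' > 0 \<and> y2 n' > 0 \<and> 2*Q n n' > Y n' \<and> 9*Q n n' \<le> 8*Y n' \<and> 9*P n n' \<ge> X n \<and> 2*P n n' < X n)"
    and TH: "U1 \<ge> 16/9" "U2 \<ge> 1/9" "W1 \<ge> 16/9" "W2 \<ge> 1/9"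
      "U1 > 16/9 \<or> U2 > 1/9 \<or> W1 > 16/9 \<or> W2 > 1/9"
  shows False
proof (cases "\<exists>n n'. X n > 0 \<and> Y n' > 0 \<and> (x1 n > 0 \<and> x2 n > 0 \<and> y1 n' > 0 \<and> y2 n' > 0 \<and> 2*Q n n' > Y n' \<and> 9*Q n n' \<le> 8*Y n' \<and> 9*P n n' \<ge> X n \<and> 2*P n n' < X n)")
  case True
  then obtain A A' where M: "x1 A > 0" "x2 A > 0" "y1 A' > 0" "y2 A' > 0" "2*Q A A' > Y A'" "9*Q A A' \<le> 8*Y A'" "9*P A A' \<ge> X A" "2*P A A' < X A"
    by blast
  show False
    apply (rule case2[of "X A" "x1 A" "x2 A" "X (oth A)" "x1 (oth A)" "x2 (oth A)"
       "Y A'" "y1 A'" "y2 A'" "Y (oth A')" "y1 (oth A')" "y2 (oth A')"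
       "Q A A'" "Q A (oth A')" "Q (oth A) A'" "Q (oth A) (oth A')"
       "P A A'" "P A (oth A')" "P (oth A) A'" "P (oth A) (oth A')" U1 U2 W1 W2])
    using X Y nn s Qb Pb IC EQ CL[of A "oth A'"] CL[of "oth A" A'] CL[of "oth A" "oth A'"] M TH
    by simp_all
next
  case False
  then have noM: "\<And>n n'. X n > 0 \<Longrightarrow> Y n' > 0 \<Longrightarrow> (Q n n' = Y n' \<and> P n n' = X n) \<or> (Q n n' = 0 \<and> P n n' = 0)"
    using CL by blast
  have X0: "\<And>n. X n \<ge> 0" using X nn by (metis add_nonneg_nonneg divide_nonneg_pos mult_nonneg_nonneg zero_le_numeral zero_less_numeral)
  have Y0: "\<And>n. Y n \<ge> 0" using Y nn by (metis add_nonneg_nonneg divide_nonneg_pos mult_nonneg_nonneg zero_le_numeral zero_less_numeral)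
  have FLeq: "FL1 (Q n n') (Y n') = FL2 (Q n n') (Y n')" if "X n > 0" for n n'
  proof (cases "Y n' > 0")
    case True
    from noM[OF that True] show ?thesis using True by (auto simp: FL1_def FL2_def)
  next
    case False
    then have "Y n' = 0" using Y0[of n'] by linarith
    moreover then have "Q n n' = 0" using Qb[of n n'] by linarith
    ultimately show ?thesis by (simp add: FL1_def FL2_def)
  qed
  have FReq: "FR1 (P n n') (X n) = FR2 (P n n') (X n)" if "Y n' > 0" for n n'
  proof (cases "X n > 0")
    case True
    from noM[OF True that] show ?thesis using True by (auto simp: FR1_def FR2_def)
  next
    case False
    then have "X n = 0" using X0[of n] by linarith
    moreover then have "P n n' = 0" using Pb[of n n'] by linarith
    ultimately show ?thesis by (simp add: FR1_def FR2_def)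
  qed
  have "U2 \<ge> 16/9"
  proof -
    have "x1 mL > 0 \<or> x1 mR > 0"
    proof (rule ccontr)
      assume "\<not> ?thesis"
      then have "x1 mL \<le> 0" "x1 mR \<le> 0" by auto
      then show False using s(1)[of mL] by simp
    qed
    then obtain n1 where n1: "x1 n1 > 0" by blast
    have "X n1 > 0" using X[of n1] n1 nn[of n1] by simp
    then have "FL2 (Q n1 mL) (Y mL) + FL2 (Q n1 (oth mL)) (Y (oth mL)) = FL1 (Q n1 mL) (Y mL) + FL1 (Q n1 (oth mL)) (Y (oth mL))"
      using FLeq by simp
    then show ?thesis using IC(2)[where n=n1 and a=mL] EQ(1)[OF n1, of mL] TH(1) by linarith
  qed
  have "W2 \<ge> 16/9"
  proof -
    have "y1 mL > 0 \<or> y1 mR > 0"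
    proof (rule ccontr)
      assume "\<not> ?thesis"
      then have "y1 mL \<le> 0" "y1 mR \<le> 0" by auto
      then show False using s(3)[of mL] by simp
    qed
    then obtain n1 where n1: "y1 n1 > 0" by blast
    have "Y n1 > 0" using Y[of n1] n1 nn(4)[of n1] by simp
    then have "FR2 (P mL n1) (X mL) + FR2 (P (oth mL) n1) (X (oth mL)) = FR1 (P mL n1) (X mL) + FR1 (P (oth mL) n1) (X (oth mL))"
      using FReq by simp
    then show ?thesis using IC(4)[where n=n1 and a=mL] EQ(3)[OF n1, of mL] TH(3) by linarith
  qed
  have pair: "x1 n/9 * FL1 (Q n n') (Y n') + 8*x2 n/9 * FL2 (Q n n') (Y n')
      + (y1 n'/9 * FR1 (P n n') (X n) + 8*y2 n'/9 * FR2 (P n n') (X n)) = 3 * X n * Y n'" for n n'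
  proof (cases "X n > 0 \<and> Y n' > 0")
    case True
    then have XY: "X n > 0" "Y n' > 0" by auto
    from noM[OF XY] show ?thesis
    proof
      assume h: "Q n n' = Y n' \<and> P n n' = X n"
      then have "FL1 (Q n n') (Y n') = 2 * Y n'" "FL2 (Q n n') (Y n') = 2 * Y n'"
        "FR1 (P n n') (X n) = X n" "FR2 (P n n') (X n) = X n" using XY by (auto simp: FL1_def FL2_def FR1_def FR2_def)
      then show ?thesis by (simp add: X Y algebra_simps)
    next
      assume h: "Q n n' = 0 \<and> P n n' = 0"
      then have "FL1 (Q n n') (Y n') = Y n'" "FL2 (Q n n') (Y n') = Y n'"
        "FR1 (P n n') (X n) = 2 * X n" "FR2 (P n n') (X n) = 2 * X n" using XY by (auto simp: FL1_def FL2_def FR1_def FR2_def)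
      then show ?thesis by (simp add: X Y algebra_simps)
    qed
  next
    case False
    then consider "X n = 0" | "Y n' = 0" using X0[of n] Y0[of n'] by linarith
    then show ?thesis
    proof cases
      case 1
      then have "x1 n = 0" "x2 n = 0" using X[of n] nn[of n] by simp_all
      moreover have "P n n' = 0" using Pb[of n n'] 1 by (metis order_antisym)
      ultimately show ?thesis using 1 by (simp add: FR1_def FR2_def)
    next
      case 2
      then have "y1 n' = 0" "y2 n' = 0" using Y[of n'] nn(3,4)[of n'] by simp_all
      moreover have "Q n n' = 0" using Qb[of n n'] 2 by (metis order_antisym)
      ultimately show ?thesis using 2 by (simp add: FL1_def FL2_def)
    qed
  qed

  have e1: "x1 n * U1 = x1 n * (FL1 (Q n mL) (Y mL) + FL1 (Q n mR) (Y mR))" for n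
    using EQ(1)[where n=n and a=mL] nn(1)[of n] by (cases "x1 n > 0") auto
  have e2: "x2 n * U2 = x2 n * (FL2 (Q n mL) (Y mL) + FL2 (Q n mR) (Y mR))" for n
    using EQ(2)[where n=n and a=mL] nn(2)[of n] by (cases "x2 n > 0") auto
  have e3: "y1 n * W1 = y1 n * (FR1 (P mL n) (X mL) + FR1 (P mR n) (X mR))" for n
    using EQ(3)[where n=n and a=mL] nn(3)[of n] by (cases "y1 n > 0") auto
  have e4: "y2 n * W2 = y2 n * (FR2 (P mL n) (X mL) + FR2 (P mR n) (X mR))" for n
    using EQ(4)[where n=n and a=mL] nn(4)[of n] by (cases "y2 n > 0") auto
  have s1: "x1 mL + x1 mR = 1" "x2 mL + x2 mR = 1" "y1 mL + y1 mR = 1" "y2 mL + y2 mR = 1"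
    using s[of mL] by simp_all
  have "U1/9 + 8*U2/9 + W1/9 + 8*W2/9 = (x1 mL + x1 mR) * U1/9 + 8*((x2 mL + x2 mR) * U2)/9
     + (y1 mL + y1 mR) * W1/9 + 8*((y2 mL + y2 mR) * W2)/9" using s1 by simp
  also have "\<dots> = (x1 mL * U1 + x1 mR * U1)/9 + 8*(x2 mL * U2 + x2 mR * U2)/9
     + (y1 mL * W1 + y1 mR * W1)/9 + 8*(y2 mL * W2 + y2 mR * W2)/9" by (simp only: distrib_right)
  also have "\<dots> = 3 * X mL * Y mL + 3 * X mL * Y mR + 3 * X mR * Y mL + 3 * X mR * Y mR"
    unfolding e1 e2 e3 e4 pair[of mL mL, symmetric] pair[of mL mR, symmetric] pair[of mR mL, symmetric] pair[of mR mR, symmetric]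
    by (simp add: algebra_simps add_divide_distrib)
  also have "\<dots> = 3 * (X mL + X mR) * (Y mL + Y mR)" by (simp add: algebra_simps)
  finally have wel: "U1/9 + 8*U2/9 + W1/9 + 8*W2/9 = 3 * (X mL + X mR) * (Y mL + Y mR)" .
  have "X mL + X mR = 1" "Y mL + Y mR = 1" using s1 X Y by simp_all
  then have "U1/9 + 8*U2/9 + W1/9 + 8*W2/9 = 3" using wel by simp
  then show False using \<open>U2 \<ge> 16/9\<close> \<open>W2 \<ge> 16/9\<close> TH by linarith
qed



lemma conv_le: "0 \<le> a \<Longrightarrow> a \<le> 1 \<Longrightarrow> u \<le> c \<Longrightarrow> v \<le> c \<Longrightarrow> a*u + (1-a)*v \<le> (c::real)"
proof -
  assume h: "0 \<le> a" "a \<le> 1" "u \<le> c" "v \<le> c"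
  have "a*u \<le> a*c" using h by (simp add: mult_left_mono)
  moreover have "(1-a)*v \<le> (1-a)*c" using h by (simp add: mult_left_mono)
  ultimately show ?thesis by (simp add: algebra_simps)
qed

lemma conv_one: "a*u + (1-a)*v = u \<Longrightarrow> u \<noteq> v \<Longrightarrow> a = (1::real)"
proof -
  assume h: "a*u + (1-a)*v = u" "u \<noteq> v"
  then have "(1-a)*(v-u) = 0" by (simp add: algebra_simps)
  then show ?thesis using h(2) by simp
qed

lemma conv_zero: "a*u + (1-a)*v = v \<Longrightarrow> u \<noteq> v \<Longrightarrow> a = (0::real)"
proof -
  assume h: "a*u + (1-a)*v = v" "u \<noteq> v"
  then have "a*(u-v) = 0" by (simp add: algebra_simps)
  then show ?thesis using h(2) by simp
qed

lemma classify:
  fixes x1 x2 y1 y2 a1 a2 b1 b2 X Y P Q wL1 wL2 wR1 wR2 :: real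
  assumes X: "X = x1/9 + 8*x2/9" and Y: "Y = y1/9 + 8*y2/9"
    and nn: "0 \<le> x1" "0 \<le> x2" "0 \<le> y1" "0 \<le> y2"
    and ab: "0 \<le> a1" "a1 \<le> 1" "0 \<le> a2" "a2 \<le> 1" "0 \<le> b1" "b1 \<le> 1" "0 \<le> b2" "b2 \<le> 1"
    and P: "P = x1*a1/9 + 8*x2*a2/9" and Q: "Q = y1*b1/9 + 8*y2*b2/9"
    and Qb: "0 \<le> Q" "Q \<le> Y" and Pb: "0 \<le> P" "P \<le> X"
    and Xp: "X > 0" and Yp: "Y > 0"
    and w: "wL1 = a1*(2*Q) + (1-a1)*(Y-Q)" "wL2 = a2*(17*Q-15*Y) + (1-a2)*(Y-Q)"
      "wR1 = b1*P + (1-b1)*(2*X-2*P)" "wR2 = b2*P + (1-b2)*(2*X-17*P)"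
    and BR: "x1 > 0 \<Longrightarrow> wL1 = FL1 Q Y" "x2 > 0 \<Longrightarrow> wL2 = FL2 Q Y"
      "y1 > 0 \<Longrightarrow> wR1 = FR1 P X" "y2 > 0 \<Longrightarrow> wR2 = FR2 P X"
    and NLL: "(x1>0 \<and> wL1 > 2*Y) \<or> (x2>0 \<and> wL2 > 2*Y) \<or> (y1 > 0 \<and> wR1 > X) \<or> (y2>0 \<and> wR2 > X) \<or>
       ((x1>0 \<longrightarrow> wL1 \<ge> 2*Y) \<and> (x2>0 \<longrightarrow> wL2 \<ge> 2*Y) \<and> (y1>0 \<longrightarrow> wR1 \<ge> X) \<and> (y2>0 \<longrightarrow> wR2 \<ge> X))"
    and NRR: "(x1>0 \<and> wL1 > Y) \<or> (x2>0 \<and> wL2 > Y) \<or> (y1 > 0 \<and> wR1 > 2*X) \<or> (y2>0 \<and> wR2 > 2*X) \<or>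
       ((x1>0 \<longrightarrow> wL1 \<ge> Y) \<and> (x2>0 \<longrightarrow> wL2 \<ge> Y) \<and> (y1>0 \<longrightarrow> wR1 \<ge> 2*X) \<and> (y2>0 \<longrightarrow> wR2 \<ge> 2*X))"
  shows "(Q = Y \<and> P = X) \<or> (Q = 0 \<and> P = 0) \<or>
     (x1 > 0 \<and> x2 > 0 \<and> y1 > 0 \<and> y2 > 0 \<and> 2*Q > Y \<and> 9*Q \<le> 8*Y \<and> 9*P \<ge> X \<and> 2*P < X)"
proof -
  have wL1u: "wL1 \<le> 2*Y" using w(1) ab Qb by (intro conv_le[of a1 "2*Q" "2*Y" "Y-Q", folded w(1)]) (auto)
  have wL2u: "wL2 \<le> 2*Y" using w(2) ab Qb by (intro conv_le[of a2 "17*Q-15*Y" "2*Y" "Y-Q", folded w(2)]) (auto)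
  have wR1u: "wR1 \<le> 2*X" using w(3) ab Pb by (intro conv_le[of b1 "P" "2*X" "2*X-2*P", folded w(3)]) (auto)
  have wR2u: "wR2 \<le> 2*X" using w(4) ab Pb by (intro conv_le[of b2 "P" "2*X" "2*X-17*P", folded w(4)]) (auto)
  show ?thesis
  proof (cases "9*Q > 8*Y")
    case True
    have a1: "x1 > 0 \<Longrightarrow> a1 = 1" using BR(1) w(1) True Yp by (intro conv_one[of a1 "2*Q" "Y-Q"]) (auto simp: FL1_def)
    have a2: "x2 > 0 \<Longrightarrow> a2 = 1" using BR(2) w(2) True Yp by (intro conv_one[of a2 "17*Q-15*Y" "Y-Q"]) (auto simp: FL2_def)
    have e1: "x1*a1 = x1" using a1 nn by (cases "x1 > 0") auto
    have e2: "x2*a2 = x2" using a2 nn by (cases "x2 > 0") auto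
    have PX: "P = X" unfolding P X by (simp only: mult.assoc e1 e2)
    have r1: "wR1 \<le> X" using w(3) ab PX Xp by (intro conv_le[of b1 "P" "X" "2*X-2*P", folded w(3)]) (auto)
    have r2: "wR2 \<le> X" using w(4) ab PX Xp by (intro conv_le[of b2 "P" "X" "2*X-17*P", folded w(4)]) (auto)
    have allge: "(x1>0 \<longrightarrow> wL1 \<ge> 2*Y) \<and> (x2>0 \<longrightarrow> wL2 \<ge> 2*Y)" using NLL wL1u wL2u r1 r2 by auto
    have "x1 > 0 \<or> x2 > 0" using Xp X nn by (cases "x1 > 0") auto
    then have "Q = Y"
    proof
      assume "x1 > 0"
      then have "FL1 Q Y \<ge> 2*Y" using allge BR(1) by auto
      then show "Q = Y" using Qb Yp by (simp add: FL1_def)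
    next
      assume "x2 > 0"
      then have "FL2 Q Y \<ge> 2*Y" using allge BR(2) by auto
      then show "Q = Y" using Qb Yp by (simp add: FL2_def)
    qed
    then show ?thesis using PX by simp
  next
    case nQ: False
    show ?thesis
    proof (cases "9*P < X")
      case True
      have b1: "y1 > 0 \<Longrightarrow> b1 = 0" using BR(3) w(3) True Xp by (intro conv_zero[of b1 "P" "2*X-2*P"]) (auto simp: FR1_def)
      have b2: "y2 > 0 \<Longrightarrow> b2 = 0" using BR(4) w(4) True Xp by (intro conv_zero[of b2 "P" "2*X-17*P"]) (auto simp: FR2_def)
      have e1: "y1*b1 = 0" using b1 nn by (cases "y1 > 0") auto
      have e2: "y2*b2 = 0" using b2 nn by (cases "y2 > 0") auto
      have Q0: "Q = 0" unfolding Q by (simp only: mult.assoc e1 e2)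
      have l1: "wL1 \<le> Y" using w(1) ab Q0 Yp by (intro conv_le[of a1 "2*Q" "Y" "Y-Q", folded w(1)]) (auto)
      have l2: "wL2 \<le> Y" using w(2) ab Q0 Yp by (intro conv_le[of a2 "17*Q-15*Y" "Y" "Y-Q", folded w(2)]) (auto)
      have allge: "(y1>0 \<longrightarrow> wR1 \<ge> 2*X) \<and> (y2>0 \<longrightarrow> wR2 \<ge> 2*X)" using NRR wR1u wR2u l1 l2 by auto
      have "y1 > 0 \<or> y2 > 0" using Yp Y nn by (cases "y1 > 0") auto
      then have "P = 0"
      proof
        assume "y1 > 0"
        then have "FR1 P X \<ge> 2*X" using allge BR(3) by auto
        then show "P = 0" using Pb Xp by (simp add: FR1_def)
      next
        assume "y2 > 0"
        then have "FR2 P X \<ge> 2*X" using allge BR(4) by auto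
        then show "P = 0" using Pb Xp by (simp add: FR2_def)
      qed
      then show ?thesis using Q0 by simp
    next
      case nP: False
      have L2b: "\<not> (x2 > 0 \<and> wL2 > Y)" using BR(2) nQ Qb by (auto simp: FL2_def)
      have R2b: "\<not> (y2 > 0 \<and> wR2 > X)" using BR(4) nP Pb by (auto simp: FR2_def)
      have notallLL: "\<not> ((x1>0 \<longrightarrow> wL1 \<ge> 2*Y) \<and> (x2>0 \<longrightarrow> wL2 \<ge> 2*Y))"
      proof
        assume h: "(x1>0 \<longrightarrow> wL1 \<ge> 2*Y) \<and> (x2>0 \<longrightarrow> wL2 \<ge> 2*Y)"
        have "x1 > 0 \<or> x2 > 0" using Xp X nn by (cases "x1 > 0") auto
        then show False
        proof
          assume "x1 > 0" then have "FL1 Q Y \<ge> 2*Y" using h BR(1) by auto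
          then show False using nQ Qb Yp by (simp add: FL1_def)
        next
          assume "x2 > 0" then have "FL2 Q Y \<ge> 2*Y" using h BR(2) by auto
          then show False using nQ Qb Yp by (simp add: FL2_def)
        qed
      qed
      have notallRR: "\<not> ((y1>0 \<longrightarrow> wR1 \<ge> 2*X) \<and> (y2>0 \<longrightarrow> wR2 \<ge> 2*X))"
      proof
        assume h: "(y1>0 \<longrightarrow> wR1 \<ge> 2*X) \<and> (y2>0 \<longrightarrow> wR2 \<ge> 2*X)"
        have "y1 > 0 \<or> y2 > 0" using Yp Y nn by (cases "y1 > 0") auto
        then show False
        proof
          assume "y1 > 0" then have "FR1 P X \<ge> 2*X" using h BR(3) by auto
          then show False using nP Pb Xp by (simp add: FR1_def)
        next
          assume "y2 > 0" then have "FR2 P X \<ge> 2*X" using h BR(4) by auto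
          then show False using nP Pb Xp by (simp add: FR2_def)
        qed
      qed
      have R1: "y1 > 0 \<and> wR1 > X" using NLL wL1u wL2u R2b notallLL by force
      have L1: "x1 > 0 \<and> wL1 > Y" using NRR wR1u wR2u L2b notallRR by force
      have q2: "2*Q > Y" using L1 BR(1) Qb by (auto simp: FL1_def max_def split: if_splits)
      have p2: "2*P < X" using R1 BR(3) Pb by (auto simp: FR1_def max_def split: if_splits)
      have a1: "a1 = 1" using BR(1) L1 w(1) q2 Qb by (intro conv_one[of a1 "2*Q" "Y-Q"]) (auto simp: FL1_def)
      have b1: "b1 = 0" using BR(3) R1 w(3) p2 Pb by (intro conv_zero[of b1 "P" "2*X-2*P"]) (auto simp: FR1_def)
      have x2: "x2 > 0"
      proof (rule ccontr)
        assume "\<not> x2 > 0" then have "x2 = 0" using nn by simp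
        then have "P = X" using P X a1 by simp
        then show False using p2 Xp by simp
      qed
      have y2: "y2 > 0"
      proof (rule ccontr)
        assume "\<not> y2 > 0" then have "y2 = 0" using nn by simp
        then have "Q = 0" using Q b1 by simp
        then show False using q2 Yp by simp
      qed
      show ?thesis using L1 R1 x2 y2 q2 p2 nQ nP by auto
    qed
  qed
qed



definition allL :: "(ex_type, ex_msg) strategy" where "allL = ((\<lambda>t m. if m = mL then 1 else 0), (\<lambda>t m m'. 1))"
definition allR :: "(ex_type, ex_msg) strategy" where "allR = ((\<lambda>t m. if m = mL then 1 else 0), (\<lambda>t m m'. 0))"

lemma valid_allL: "valid_strategy allL"
  by (simp add: valid_strategy_def is_dist_def allL_def sum_ex_msg)
lemma valid_allR: "valid_strategy allR"
  by (simp add: valid_strategy_def is_dist_def allR_def sum_ex_msg)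

lemma eqpay_allL: "eq_pay u_ex t allL H allL = (if isL t then 2 else 1) * (H L1 + H L2 + H R1 + H R2)"
  by (cases t) (simp_all add: eq_pay_def type_payoff_form EPm_def Qf_def msg_prob_def sum_ex_type sum_ex_msg allL_def algebra_simps)
lemma eqpay_allR: "eq_pay u_ex t allR H allR = (if isL t then 1 else 2) * (H L1 + H L2 + H R1 + H R2)"
  by (cases t) (simp_all add: eq_pay_def type_payoff_form EPm_def Qf_def msg_prob_def sum_ex_type sum_ex_msg allR_def algebra_simps)

lemma allL_eq:
  assumes "\<forall>t. 0 \<le> G t" "\<forall>t. 0 \<le> H t"
  shows "is_eq u_ex G H allL allL"
proof (rule is_eqI[OF valid_allL valid_allL]; intro allI impI)
  fix t m
  show "(\<Sum>m'\<in>UNIV. BRv (u_ex t) (Qf H allL m' m) (msg_prob H allL m')) \<le> eq_pay u_ex t allL H allL"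
    using assms by (cases t; simp only: eqpay_allL; simp add: BRv_def EPm_def Qf_def msg_prob_def sum_ex_type sum_ex_msg allL_def all_ex_type max_def)
  show "(\<Sum>m'\<in>UNIV. BRv (u_ex t) (Qf G allL m' m) (msg_prob G allL m')) \<le> eq_pay u_ex t allL G allL"
    using assms by (cases t; simp only: eqpay_allL; simp add: BRv_def EPm_def Qf_def msg_prob_def sum_ex_type sum_ex_msg allL_def all_ex_type max_def)
qed

lemma allR_eq:
  assumes "\<forall>t. 0 \<le> G t" "\<forall>t. 0 \<le> H t"
  shows "is_eq u_ex G H allR allR"
proof (rule is_eqI[OF valid_allR valid_allR]; intro allI impI)
  fix t m
  show "(\<Sum>m'\<in>UNIV. BRv (u_ex t) (Qf H allR m' m) (msg_prob H allR m')) \<le> eq_pay u_ex t allR H allR"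
    using assms by (cases t; simp only: eqpay_allR; simp add: BRv_def EPm_def Qf_def msg_prob_def sum_ex_type sum_ex_msg allR_def all_ex_type max_def)
  show "(\<Sum>m'\<in>UNIV. BRv (u_ex t) (Qf G allR m' m) (msg_prob G allR m')) \<le> eq_pay u_ex t allR G allR"
    using assms by (cases t; simp only: eqpay_allR; simp add: BRv_def EPm_def Qf_def msg_prob_def sum_ex_type sum_ex_msg allR_def all_ex_type max_def)
qed



lemma noCP_form:
  assumes "\<not> CP_trumps u \<rho> \<rho> s1 s2 G H n n'" "msg_prob G s1 n > 0" "msg_prob H s2 n' > 0"
    "is_eq u (post G s1 n) (post H s2 n') \<rho> \<rho>"
  shows "(\<exists>t. post G s1 n t > 0 \<and> pc_pay u s1 s2 H n n' t > eq_pay u t \<rho> (post H s2 n') \<rho>) \<or>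
    (\<exists>t. post H s2 n' t > 0 \<and> pc_pay u s2 s1 G n' n t > eq_pay u t \<rho> (post G s1 n) \<rho>) \<or>
    ((\<forall>t. post G s1 n t > 0 \<longrightarrow> pc_pay u s1 s2 H n n' t \<ge> eq_pay u t \<rho> (post H s2 n') \<rho>) \<and>
     (\<forall>t. post H s2 n' t > 0 \<longrightarrow> pc_pay u s2 s1 G n' n t \<ge> eq_pay u t \<rho> (post G s1 n) \<rho>))"
  using assms unfolding CP_trumps_def by (meson not_le not_less)

lemma msgG0: "msg_prob G0 s n = fst s L1 n / 9 + 8 * fst s L2 n / 9"
  by (simp add: msg_prob_def sum_ex_type)
lemma msgH0: "msg_prob H0 s n = fst s R1 n / 9 + 8 * fst s R2 n / 9"
  by (simp add: msg_prob_def sum_ex_type)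
lemma QfG0: "Qf G0 s n n' = fst s L1 n * snd s L1 n n' / 9 + 8 * fst s L2 n * snd s L2 n n' / 9"
  by (simp add: Qf_def sum_ex_type)
lemma QfH0: "Qf H0 s n n' = fst s R1 n * snd s R1 n n' / 9 + 8 * fst s R2 n * snd s R2 n n' / 9"
  by (simp add: Qf_def sum_ex_type)

lemma Qf_bounds:
  assumes "valid_strategy s" "\<forall>t. 0 \<le> H t"
  shows "0 \<le> Qf H s m' m" "Qf H s m' m \<le> msg_prob H s m'"
proof -
  have v: "\<And>t. 0 \<le> fst s t m'" "\<And>t. 0 \<le> snd s t m' m" "\<And>t. snd s t m' m \<le> 1"
    using assms(1) by (auto simp: valid_strategy_def is_dist_def)
  show "0 \<le> Qf H s m' m" unfolding Qf_def using v assms(2) by (intro sum_nonneg) simp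
  show "Qf H s m' m \<le> msg_prob H s m'" unfolding Qf_def msg_prob_def
  proof (rule sum_mono)
    fix t
    have "0 \<le> H t * fst s t m'" using v assms(2) by simp
    then show "H t * fst s t m' * snd s t m' m \<le> H t * fst s t m'"
      using v(3)[of t] by (simp add: mult_left_le)
  qed
qed

lemma post_nonneg: "valid_strategy s \<Longrightarrow> \<forall>t. 0 \<le> G t \<Longrightarrow> msg_prob G s m > 0 \<Longrightarrow> \<forall>t. 0 \<le> post G s m t"
  by (auto simp: post_def valid_strategy_def is_dist_def)

lemma post_sum: "msg_prob G s m \<noteq> 0 \<Longrightarrow> post G s m L1 + post G s m L2 + post G s m R1 + post G s m R2 = 1"
  unfolding post_def msg_prob_def by (simp add: sum_ex_type add_divide_distrib[symmetric])

lemma G0nn: "\<forall>t. 0 \<le> G0 t" by (simp add: all_ex_type)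
lemma H0nn: "\<forall>t. 0 \<le> H0 t" by (simp add: all_ex_type)

lemma EPmL1: "EPm (u_ex L1) a Q Y = a*(2*Q) + (1-a)*(Y-Q)" by (simp add: EPm_def algebra_simps)
lemma EPmL2: "EPm (u_ex L2) a Q Y = a*(17*Q-15*Y) + (1-a)*(Y-Q)" by (simp add: EPm_def algebra_simps)
lemma EPmR1: "EPm (u_ex R1) a Q Y = a*Q + (1-a)*(2*Y-2*Q)" by (simp add: EPm_def algebra_simps)
lemma EPmR2: "EPm (u_ex R2) a Q Y = a*Q + (1-a)*(2*Y-17*Q)" by (simp add: EPm_def algebra_simps)
lemma BRvs: "BRv (u_ex L1) Q Y = FL1 Q Y" "BRv (u_ex L2) Q Y = FL2 Q Y"
  "BRv (u_ex R1) Q Y = FR1 Q Y" "BRv (u_ex R2) Q Y = FR2 Q Y"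
  by (simp_all add: BRv_def EPm_def FL1_def FL2_def FR1_def FR2_def algebra_simps)

lemma BRvs': "BRv (2, 0, 0, 1) Q Y = FL1 Q Y" "BRv (2, -15, 0, 1) Q Y = FL2 Q Y"
  "BRv (1, 0, 0, 2) Q Y = FR1 Q Y" "BRv (1, 0, -15, 2) Q Y = FR2 Q Y"
  using BRvs by simp_all

lemma CL_at:
  assumes eq: "is_eq u_ex G0 H0 tau1 tau2"
    and nLL: "\<not> CP_trumps u_ex allL allL tau1 tau2 G0 H0 n n'"
    and nRR: "\<not> CP_trumps u_ex allR allR tau1 tau2 G0 H0 n n'"
    and Xp: "msg_prob G0 tau1 n > 0" and Yp: "msg_prob H0 tau2 n' > 0"
  shows "(Qf H0 tau2 n' n = msg_prob H0 tau2 n' \<and> Qf G0 tau1 n n' = msg_prob G0 tau1 n) \<or>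
     (Qf H0 tau2 n' n = 0 \<and> Qf G0 tau1 n n' = 0) \<or>
     (fst tau1 L1 n > 0 \<and> fst tau1 L2 n > 0 \<and> fst tau2 R1 n' > 0 \<and> fst tau2 R2 n' > 0 \<and>
      2*Qf H0 tau2 n' n > msg_prob H0 tau2 n' \<and> 9*Qf H0 tau2 n' n \<le> 8*msg_prob H0 tau2 n' \<and>
      9*Qf G0 tau1 n n' \<ge> msg_prob G0 tau1 n \<and> 2*Qf G0 tau1 n n' < msg_prob G0 tau1 n)"
proof -
  have v1: "valid_strategy tau1" and v2: "valid_strategy tau2" using eq by (auto simp: is_eq_def)
  have eq2: "is_eq u_ex H0 G0 tau2 tau1" using eq by (rule is_eq_sym)
  have pn1: "\<forall>t. 0 \<le> post G0 tau1 n t" using post_nonneg[OF v1 G0nn Xp] .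
  have pn2: "\<forall>t. 0 \<le> post H0 tau2 n' t" using post_nonneg[OF v2 H0nn Yp] .
  have s1: "post G0 tau1 n L1 + post G0 tau1 n L2 + post G0 tau1 n R1 + post G0 tau1 n R2 = 1"
    using Xp by (intro post_sum) simp
  have s2: "post H0 tau2 n' L1 + post H0 tau2 n' L2 + post H0 tau2 n' R1 + post H0 tau2 n' R2 = 1"
    using Yp by (intro post_sum) simp
  have vv: "\<And>t m. 0 \<le> fst tau1 t m" "\<And>t m. 0 \<le> fst tau2 t m"
    "\<And>t m m'. 0 \<le> snd tau1 t m m'" "\<And>t m m'. snd tau1 t m m' \<le> 1"
    "\<And>t m m'. 0 \<le> snd tau2 t m m'" "\<And>t m m'. snd tau2 t m m' \<le> 1"
    using v1 v2 by (auto simp: valid_strategy_def is_dist_def)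
  define X where "X = msg_prob G0 tau1 n"
  define Y where "Y = msg_prob H0 tau2 n'"
  define P where "P = Qf G0 tau1 n n'"
  define Q where "Q = Qf H0 tau2 n' n"
  define wL1 where "wL1 = EPm (u_ex L1) (snd tau1 L1 n n') Q Y"
  define wL2 where "wL2 = EPm (u_ex L2) (snd tau1 L2 n n') Q Y"
  define wR1 where "wR1 = EPm (u_ex R1) (snd tau2 R1 n' n) P X"
  define wR2 where "wR2 = EPm (u_ex R2) (snd tau2 R2 n' n) P X"
  have pc: "pc_pay u_ex tau1 tau2 H0 n n' L1 = wL1 / Y" "pc_pay u_ex tau1 tau2 H0 n n' L2 = wL2 / Y"
    "pc_pay u_ex tau2 tau1 G0 n' n R1 = wR1 / X" "pc_pay u_ex tau2 tau1 G0 n' n R2 = wR2 / X"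
    using Xp Yp by (simp_all add: pc_pay_form wL1_def wL2_def wR1_def wR2_def X_def Y_def P_def Q_def)
  have pos: "post G0 tau1 n L1 > 0 \<longleftrightarrow> fst tau1 L1 n > 0" "post G0 tau1 n L2 > 0 \<longleftrightarrow> fst tau1 L2 n > 0"
    "\<not> post G0 tau1 n R1 > 0" "\<not> post G0 tau1 n R2 > 0"
    "post H0 tau2 n' R1 > 0 \<longleftrightarrow> fst tau2 R1 n' > 0" "post H0 tau2 n' R2 > 0 \<longleftrightarrow> fst tau2 R2 n' > 0"
    "\<not> post H0 tau2 n' L1 > 0" "\<not> post H0 tau2 n' L2 > 0"
    using Xp Yp vv by (auto simp: post_def zero_less_divide_iff zero_less_mult_iff)
  have Yp': "Y > 0" and Xp': "X > 0" using Xp Yp by (simp_all add: X_def Y_def)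
  note NLL0 = noCP_form[OF nLL Xp Yp allL_eq[OF pn1 pn2]]
  note NRR0 = noCP_form[OF nRR Xp Yp allR_eq[OF pn1 pn2]]
  have eL: "eq_pay u_ex t allL (post H0 tau2 n') allL = (if isL t then 2 else 1)"
    "eq_pay u_ex t allL (post G0 tau1 n) allL = (if isL t then 2 else 1)" for t
    using s1 s2 by (simp_all add: eqpay_allL)
  have eR: "eq_pay u_ex t allR (post H0 tau2 n') allR = (if isL t then 1 else 2)"
    "eq_pay u_ex t allR (post G0 tau1 n) allR = (if isL t then 1 else 2)" for t
    using s1 s2 by (simp_all add: eqpay_allR)
  have NLL: "(fst tau1 L1 n>0 \<and> wL1 > 2*Y) \<or> (fst tau1 L2 n>0 \<and> wL2 > 2*Y) \<or> (fst tau2 R1 n' > 0 \<and> wR1 > X) \<or> (fst tau2 R2 n'>0 \<and> wR2 > X) \<or>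
       ((fst tau1 L1 n>0 \<longrightarrow> wL1 \<ge> 2*Y) \<and> (fst tau1 L2 n>0 \<longrightarrow> wL2 \<ge> 2*Y) \<and> (fst tau2 R1 n'>0 \<longrightarrow> wR1 \<ge> X) \<and> (fst tau2 R2 n'>0 \<longrightarrow> wR2 \<ge> X))"
    using NLL0 unfolding ex_ex_type all_ex_type eL pos pc
    using Xp' Yp' by (simp add: pos pos_less_divide_eq pos_le_divide_eq)
  have NRR: "(fst tau1 L1 n>0 \<and> wL1 > Y) \<or> (fst tau1 L2 n>0 \<and> wL2 > Y) \<or> (fst tau2 R1 n' > 0 \<and> wR1 > 2*X) \<or> (fst tau2 R2 n'>0 \<and> wR2 > 2*X) \<or>
       ((fst tau1 L1 n>0 \<longrightarrow> wL1 \<ge> Y) \<and> (fst tau1 L2 n>0 \<longrightarrow> wL2 \<ge> Y) \<and> (fst tau2 R1 n'>0 \<longrightarrow> wR1 \<ge> 2*X) \<and> (fst tau2 R2 n'>0 \<longrightarrow> wR2 \<ge> 2*X))"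
    using NRR0 unfolding ex_ex_type all_ex_type eR pos pc
    using Xp' Yp' by (simp add: pos pos_less_divide_eq pos_le_divide_eq)
  have BR: "fst tau1 L1 n > 0 \<Longrightarrow> wL1 = FL1 Q Y" "fst tau1 L2 n > 0 \<Longrightarrow> wL2 = FL2 Q Y"
    "fst tau2 R1 n' > 0 \<Longrightarrow> wR1 = FR1 P X" "fst tau2 R2 n' > 0 \<Longrightarrow> wR2 = FR2 P X"
    using eq_structure(2)[OF eq, of L1 n n'] eq_structure(2)[OF eq, of L2 n n']
      eq_structure(2)[OF eq2, of R1 n' n] eq_structure(2)[OF eq2, of R2 n' n]
    by (simp_all add: wL1_def wL2_def wR1_def wR2_def BRvs' P_def Q_def X_def Y_def)
  have "(Q = Y \<and> P = X) \<or> (Q = 0 \<and> P = 0) \<or>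
     (fst tau1 L1 n > 0 \<and> fst tau1 L2 n > 0 \<and> fst tau2 R1 n' > 0 \<and> fst tau2 R2 n' > 0 \<and> 2*Q > Y \<and> 9*Q \<le> 8*Y \<and> 9*P \<ge> X \<and> 2*P < X)"
  proof -
    have hX: "X = fst tau1 L1 n/9 + 8*fst tau1 L2 n/9" by (simp add: X_def msgG0)
    have hY: "Y = fst tau2 R1 n'/9 + 8*fst tau2 R2 n'/9" by (simp add: Y_def msgH0)
    have hP: "P = fst tau1 L1 n * snd tau1 L1 n n'/9 + 8*fst tau1 L2 n * snd tau1 L2 n n'/9" by (simp add: P_def QfG0)
    have hQ: "Q = fst tau2 R1 n' * snd tau2 R1 n' n/9 + 8*fst tau2 R2 n' * snd tau2 R2 n' n/9" by (simp add: Q_def QfH0)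
    have Qb: "0 \<le> Q" "Q \<le> Y" using Qf_bounds[OF v2 H0nn, of n' n] by (simp_all add: Q_def Y_def)
    have Pb: "0 \<le> P" "P \<le> X" using Qf_bounds[OF v1 G0nn, of n n'] by (simp_all add: P_def X_def)
    have w: "wL1 = snd tau1 L1 n n'*(2*Q) + (1-snd tau1 L1 n n')*(Y-Q)"
      "wL2 = snd tau1 L2 n n'*(17*Q-15*Y) + (1-snd tau1 L2 n n')*(Y-Q)"
      "wR1 = snd tau2 R1 n' n*P + (1-snd tau2 R1 n' n)*(2*X-2*P)"
      "wR2 = snd tau2 R2 n' n*P + (1-snd tau2 R2 n' n)*(2*X-17*P)"
      unfolding wL1_def wL2_def wR1_def wR2_def by (simp_all only: EPmL1 EPmL2 EPmR1 EPmR2)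
    show ?thesis
      by (rule classify[OF hX hY vv(1) vv(1) vv(2) vv(2) vv(3) vv(4) vv(3) vv(4) vv(5) vv(6) vv(5) vv(6)
          hP hQ Qb Pb Xp' Yp' w BR NLL NRR])
  qed
  then show ?thesis by (simp add: P_def Q_def X_def Y_def)
qed



lemma sum_oth: "(\<Sum>m\<in>UNIV. f m) = f a + (f (oth a)::real)"
  by (cases a) (simp_all add: sum_ex_msg)

lemma retrump_LR:
  assumes tr: "CP_trumps u_ex tau1 tau2 sigma_ex sigma_ex F_ex F_ex mL mR"
  shows "\<exists>\<rho>1 \<rho>2 n n'. CP_trumps u_ex \<rho>1 \<rho>2 tau1 tau2 G0 H0 n n'"
proof (rule ccontr)
  assume nt: "\<not> ?thesis"
  have nLL: "\<And>n n'. \<not> CP_trumps u_ex allL allL tau1 tau2 G0 H0 n n'" using nt by blast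
  have nRR: "\<And>n n'. \<not> CP_trumps u_ex allR allR tau1 tau2 G0 H0 n n'" using nt by blast
  have eq: "is_eq u_ex G0 H0 tau1 tau2" using tr by (simp add: CP_trumps_def post_mL post_mR)
  have eq2: "is_eq u_ex H0 G0 tau2 tau1" using eq by (rule is_eq_sym)
  have v1: "valid_strategy tau1" and v2: "valid_strategy tau2" using eq by (auto simp: is_eq_def)
  have vv: "\<And>t m. 0 \<le> fst tau1 t m" "\<And>t m. 0 \<le> fst tau2 t m"
    "\<And>t. sum (fst tau1 t) UNIV = 1" "\<And>t. sum (fst tau2 t) UNIV = 1"
    using v1 v2 by (auto simp: valid_strategy_def is_dist_def)
  have thr1: "\<forall>t. G0 t > 0 \<longrightarrow> pc_pay u_ex sigma_ex sigma_ex F_ex mL mR t \<le> eq_pay u_ex t tau1 H0 tau2"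
    and thr2: "\<forall>t. H0 t > 0 \<longrightarrow> pc_pay u_ex sigma_ex sigma_ex F_ex mR mL t \<le> eq_pay u_ex t tau2 G0 tau1"
    and str: "(\<exists>t. G0 t > 0 \<and> pc_pay u_ex sigma_ex sigma_ex F_ex mL mR t < eq_pay u_ex t tau1 H0 tau2) \<or>
      (\<exists>t. H0 t > 0 \<and> pc_pay u_ex sigma_ex sigma_ex F_ex mR mL t < eq_pay u_ex t tau2 G0 tau1)"
    using tr by (simp_all add: CP_trumps_def post_mL post_mR)
  have TH: "eq_pay u_ex L1 tau1 H0 tau2 \<ge> 16/9" "eq_pay u_ex L2 tau1 H0 tau2 \<ge> 1/9"
    "eq_pay u_ex R1 tau2 G0 tau1 \<ge> 16/9" "eq_pay u_ex R2 tau2 G0 tau1 \<ge> 1/9"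
    "eq_pay u_ex L1 tau1 H0 tau2 > 16/9 \<or> eq_pay u_ex L2 tau1 H0 tau2 > 1/9 \<or>
     eq_pay u_ex R1 tau2 G0 tau1 > 16/9 \<or> eq_pay u_ex R2 tau2 G0 tau1 > 1/9"
    using thr1 thr2 str by (simp_all add: all_ex_type ex_ex_type pcs)
  show False
    apply (rule core[of "msg_prob G0 tau1" "\<lambda>n. fst tau1 L1 n" "\<lambda>n. fst tau1 L2 n"
        "msg_prob H0 tau2" "\<lambda>n. fst tau2 R1 n" "\<lambda>n. fst tau2 R2 n"
        "\<lambda>n n'. Qf H0 tau2 n' n" "\<lambda>n n'. Qf G0 tau1 n n'"
        "eq_pay u_ex L1 tau1 H0 tau2" "eq_pay u_ex L2 tau1 H0 tau2"
        "eq_pay u_ex R1 tau2 G0 tau1" "eq_pay u_ex R2 tau2 G0 tau1"])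
    subgoal by (simp add: msgG0)
    subgoal by (simp add: msgH0)
    subgoal by (rule vv)
    subgoal by (rule vv)
    subgoal by (rule vv)
    subgoal by (rule vv)
    subgoal for a using vv(3)[of L1] by (simp add: sum_oth[of _ a])
    subgoal for a using vv(3)[of L2] by (simp add: sum_oth[of _ a])
    subgoal for a using vv(4)[of R1] by (simp add: sum_oth[of _ a])
    subgoal for a using vv(4)[of R2] by (simp add: sum_oth[of _ a])
    subgoal using Qf_bounds[OF v2 H0nn] by simp
    subgoal using Qf_bounds[OF v2 H0nn] by simp
    subgoal using Qf_bounds[OF v1 G0nn] by simp
    subgoal using Qf_bounds[OF v1 G0nn] by simp
    subgoal for n a using V_le[OF eq, of L1 n] by (simp add: sum_oth[of _ a] BRvs')
    subgoal for n a using V_le[OF eq, of L2 n] by (simp add: sum_oth[of _ a] BRvs')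
    subgoal for n a using V_le[OF eq2, of R1 n] by (simp add: sum_oth[of _ a] BRvs')
    subgoal for n a using V_le[OF eq2, of R2 n] by (simp add: sum_oth[of _ a] BRvs')
    subgoal for n a using eq_structure(1)[OF eq, of L1 n] by (simp add: sum_oth[of _ a] BRvs')
    subgoal for n a using eq_structure(1)[OF eq, of L2 n] by (simp add: sum_oth[of _ a] BRvs')
    subgoal for n a using eq_structure(1)[OF eq2, of R1 n] by (simp add: sum_oth[of _ a] BRvs')
    subgoal for n a using eq_structure(1)[OF eq2, of R2 n] by (simp add: sum_oth[of _ a] BRvs')
    subgoal for n n' using CL_at[OF eq nLL nRR] by blast
    using TH by simp_all
qed



lemma CP_sym: "CP_trumps u t1 t2 s1 s2 G H m m' \<Longrightarrow> CP_trumps u t2 t1 s2 s1 H G m' m"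
  unfolding CP_trumps_def using is_eq_sym by blast

lemma retrump_RL:
  assumes tr: "CP_trumps u_ex tau1 tau2 sigma_ex sigma_ex F_ex F_ex mR mL"
  shows "\<exists>\<rho>1 \<rho>2 n n'. CP_trumps u_ex \<rho>1 \<rho>2 tau1 tau2 H0 G0 n n'"
proof -
  obtain \<rho>1 \<rho>2 n n' where "CP_trumps u_ex \<rho>1 \<rho>2 tau2 tau1 G0 H0 n n'"
    using retrump_LR[OF CP_sym[OF tr]] by blast
  then show ?thesis using CP_sym by blast
qed

lemma EPm_bound:
  "0 \<le> p \<Longrightarrow> p \<le> 1 \<Longrightarrow> 0 \<le> Q \<Longrightarrow> Q \<le> Y \<Longrightarrow> EPm (u_ex t) p Q Y \<le> 2 * Y"
  by (cases t) (simp_all only: EPmL1 EPmL2 EPmR1 EPmR2; rule conv_le; simp)+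

lemma sum_msg_prob: "sum H UNIV = 1 \<Longrightarrow> valid_strategy s \<Longrightarrow> (\<Sum>m\<in>UNIV. msg_prob H s m) = (1::real)"
proof -
  assume h: "sum H UNIV = 1" "valid_strategy s"
  have "(\<Sum>m\<in>UNIV. msg_prob H s m) = (\<Sum>t\<in>UNIV. H t * (\<Sum>m\<in>UNIV. fst s t m))"
    unfolding msg_prob_def by (subst sum.swap) (simp add: sum_distrib_left)
  also have "\<dots> = 1" using h by (simp add: valid_strategy_def is_dist_def)
  finally show ?thesis .
qed

lemma eq_pay_le2:
  assumes "valid_strategy s1" "valid_strategy s2" "\<forall>t. 0 \<le> H t" "sum H UNIV = 1"
  shows "eq_pay u_ex t s1 H s2 \<le> 2"
proof -
  have x: "\<And>m. 0 \<le> fst s1 t m" "sum (fst s1 t) UNIV = 1" "\<And>m m'. 0 \<le> snd s1 t m m'" "\<And>m m'. snd s1 t m m' \<le> 1"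
    using assms(1) by (auto simp: valid_strategy_def is_dist_def)
  have "eq_pay u_ex t s1 H s2 \<le> (\<Sum>m\<in>UNIV. fst s1 t m * (\<Sum>m'\<in>UNIV. 2 * msg_prob H s2 m'))"
    unfolding eq_pay_def type_payoff_form
    using x(1,3,4) Qf_bounds[OF assms(2,3)]
    by (intro sum_mono mult_left_mono EPm_bound) auto
  also have "\<dots> = 2" using sum_msg_prob[OF assms(4,2)] x(2)
    by (simp add: sum_distrib_left[symmetric] sum_distrib_right[symmetric])
  finally show ?thesis .
qed

lemma G0_sum: "sum G0 UNIV = 1" by (simp add: sum_ex_type)
lemma H0_sum: "sum H0 UNIV = 1" by (simp add: sum_ex_type)

lemma no_trump_LL: "\<not> CP_trumps u_ex tau1 tau2 sigma_ex sigma_ex F_ex F_ex mL mL"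
proof
  assume tr: "CP_trumps u_ex tau1 tau2 sigma_ex sigma_ex F_ex F_ex mL mL"
  then have eq: "is_eq u_ex G0 G0 tau1 tau2" by (simp add: CP_trumps_def post_mL)
  then have v: "valid_strategy tau1" "valid_strategy tau2" by (auto simp: is_eq_def)
  have b1: "\<And>t. eq_pay u_ex t tau1 G0 tau2 \<le> 2" by (rule eq_pay_le2[OF v G0nn G0_sum])
  have b2: "\<And>t. eq_pay u_ex t tau2 G0 tau1 \<le> 2" by (rule eq_pay_le2[OF v(2,1) G0nn G0_sum])
  have pc: "pc_pay u_ex sigma_ex sigma_ex F_ex mL mL L1 = 2" "pc_pay u_ex sigma_ex sigma_ex F_ex mL mL L2 = 2"
    by (simp_all add: pc_pay_def post_mL sum_ex_type exp_pay_def, simp_all add: sigma_ex_def)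
  from tr have "(\<exists>t. G0 t > 0 \<and> pc_pay u_ex sigma_ex sigma_ex F_ex mL mL t < eq_pay u_ex t tau1 G0 tau2) \<or>
      (\<exists>t. G0 t > 0 \<and> pc_pay u_ex sigma_ex sigma_ex F_ex mL mL t < eq_pay u_ex t tau2 G0 tau1)"
    by (simp add: CP_trumps_def post_mL)
  then show False using b1[of L1] b1[of L2] b2[of L1] b2[of L2] pc by (auto simp: ex_ex_type)
qed

lemma no_trump_RR: "\<not> CP_trumps u_ex tau1 tau2 sigma_ex sigma_ex F_ex F_ex mR mR"
proof
  assume tr: "CP_trumps u_ex tau1 tau2 sigma_ex sigma_ex F_ex F_ex mR mR"
  then have eq: "is_eq u_ex H0 H0 tau1 tau2" by (simp add: CP_trumps_def post_mR)
  then have v: "valid_strategy tau1" "valid_strategy tau2" by (auto simp: is_eq_def)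
  have b1: "\<And>t. eq_pay u_ex t tau1 H0 tau2 \<le> 2" by (rule eq_pay_le2[OF v H0nn H0_sum])
  have b2: "\<And>t. eq_pay u_ex t tau2 H0 tau1 \<le> 2" by (rule eq_pay_le2[OF v(2,1) H0nn H0_sum])
  have pc: "pc_pay u_ex sigma_ex sigma_ex F_ex mR mR R1 = 2" "pc_pay u_ex sigma_ex sigma_ex F_ex mR mR R2 = 2"
    by (simp_all add: pc_pay_def post_mR sum_ex_type exp_pay_def, simp_all add: sigma_ex_def)
  from tr have "(\<exists>t. H0 t > 0 \<and> pc_pay u_ex sigma_ex sigma_ex F_ex mR mR t < eq_pay u_ex t tau1 H0 tau2) \<or>
      (\<exists>t. H0 t > 0 \<and> pc_pay u_ex sigma_ex sigma_ex F_ex mR mR t < eq_pay u_ex t tau2 H0 tau1)"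
    by (simp add: CP_trumps_def post_mR)
  then show False using b1[of R1] b1[of R2] b2[of R1] b2[of R2] pc by (auto simp: ex_ex_type)
qed

lemma weak: "weakly_CP u_ex F_ex sigma_ex"
  unfolding weakly_CP_def
proof (intro conjI allI impI)
  show "is_eq u_ex F_ex F_ex sigma_ex sigma_ex" by (rule sigma_eq)
  fix tau1 tau2 m m'
  assume tr: "CP_trumps u_ex tau1 tau2 sigma_ex sigma_ex F_ex F_ex m m'"
  show "\<exists>rho1 rho2 n n'. CP_trumps u_ex rho1 rho2 tau1 tau2 (post F_ex sigma_ex m) (post F_ex sigma_ex m') n n'"
  proof (cases m; cases m')
    assume "m = mL" "m' = mL" then show ?thesis using tr no_trump_LL by simp
  next
    assume "m = mL" "m' = mR" then show ?thesis using tr retrump_LR by (simp add: post_mL post_mR)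
  next
    assume "m = mR" "m' = mL" then show ?thesis using tr retrump_RL by (simp add: post_mL post_mR)
  next
    assume "m = mR" "m' = mR" then show ?thesis using tr no_trump_RR by simp
  qed
qed

lemma miscoord: "miscoord_prob F_ex F_ex sigma_ex sigma_ex mL mR > 0"
  by (simp add: miscoord_prob_def post_mL post_mR sum_ex_type, simp add: sigma_ex_def)

theorem mainTheorem14:
  shows "is_eq u_ex F_ex F_ex sigma_ex sigma_ex \<and>
         weakly_CP u_ex F_ex sigma_ex \<and>
         \<not> strongly_CP u_ex F_ex sigma_ex \<and>
         miscoord_prob F_ex F_ex sigma_ex sigma_ex mL mR > 0"
  using sigma_eq weak not_strong miscoord by blast


end
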